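(* Let $$A=\begin{bmatrix}-1&0&1&0&0&0\\0&-1&0&0&0&0\\0&0&3&0&0&0\\0&0&1&4&0&0\\0&0&0&0&4&0\\0&0&0&0&0&4\end{bmatrix},\qquad B=\begin{bmatrix}0\\1\\1\\0\\0\\1\end{bmatrix}.$$ Then $r_c(A,B)=3$, whereas $\min\{|J|: J\subseteq\{1,\dots,6\},\ (A,[B,I_6(:,J)])\text{ controllable}\}=2$.
   Context: $r_c(A,B)=\min\{\|[\Delta A,\Delta B]\|_0: \Delta A\in\mathbb{R}^{n\times n},\Delta B\in\mathbb{R}^{n\times m},(A+\Delta A,B+\Delta B)\text{ controllable}\}$, where $\|M\|_0$ is the number of nonzero entries of $M$. $I_6(:,J)$ is the submatrix of the $6\times6$ identity formed by columns indexed by $J$. Controllability means $\operatorname{rank}[B,AB,\dots,A^{n-1}B]=n$. *)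

theory Defs
  imports "Jordan_Normal_Form.DL_Rank"
begin

text \<open>Matrices are Jordan_Normal_Form matrices (type real mat), indices start at 0.\<close>

definition kalman_mat :: "'a::comm_ring_1 mat \<Rightarrow> 'a mat \<Rightarrow> 'a mat" where
  "kalman_mat A B = mat_of_cols (dim_row A)
     (concat (map (\<lambda>k. cols ((A ^\<^sub>m k) * B)) [0..<dim_row A]))"

definition controllable :: "'a::field mat \<Rightarrow> 'a mat \<Rightarrow> bool" where
  "controllable A B \<longleftrightarrow> vec_space.rank (dim_row A) (kalman_mat A B) = dim_row A"

definition nnz :: "'a::zero mat \<Rightarrow> nat" where
  "nnz M = card {(i,j). i < dim_row M \<and> j < dim_col M \<and> M $$ (i,j) \<noteq> 0}"

text \<open>Sparsest controllability radius r_c(A,B); the zero-norm of [dA, dB] is nnz dA + nnz dB.\<close>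
definition rc :: "real mat \<Rightarrow> real mat \<Rightarrow> nat" where
  "rc A B = Inf {nnz dA + nnz dB | dA dB.
      dA \<in> carrier_mat (dim_row A) (dim_row A) \<and>
      dB \<in> carrier_mat (dim_row A) (dim_col B) \<and>
      controllable (A + dA) (B + dB)}"

definition aug_cols :: "real mat \<Rightarrow> nat set \<Rightarrow> real mat" where
  "aug_cols B J = mat_of_cols (dim_row B)
     (cols B @ map (\<lambda>j. unit_vec (dim_row B) j) (sorted_list_of_set J))"

definition A7 :: "real mat" where
  "A7 = mat_of_rows_list 6
     [[-1, 0, 1, 0, 0, 0],
      [ 0,-1, 0, 0, 0, 0],
      [ 0, 0, 3, 0, 0, 0],
      [ 0, 0, 1, 4, 0, 0],
      [ 0, 0, 0, 0, 4, 0],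
      [ 0, 0, 0, 0, 0, 4]]"

definition B7 :: "real mat" where
  "B7 = mat_of_rows_list 1 [[0],[1],[1],[0],[0],[1]]"

end

theory Submission imports Defs begin

context vec_space begin

lemma max_indep_exists:
  assumes "K \<in> carrier_mat n nc"
  obtains S where "maximal S (\<lambda>T. T \<subseteq> set (cols K) \<and> lin_indpt T)"
  using maximal_exists[of "(\<lambda>T. T \<subseteq> set (cols K) \<and> lin_indpt T)" "card (set (cols K))" "{}"]
  by (meson List.finite_set card_mono empty_iff empty_subsetI finite_lin_indpt2 rev_finite_subset)

lemma rank_le_n:
  assumes K: "K \<in> carrier_mat n nc"
  shows "rank K \<le> n"
proof -
  obtain S where S: "maximal S (\<lambda>T. T \<subseteq> set (cols K) \<and> lin_indpt T)"
    using max_indep_exists[OF K] by blast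
  have r: "rank K = card S" using rank_card_indpt[OF K S] .
  have SK: "S \<subseteq> set (cols K)" and li: "lin_indpt S" using S unfolding maximal_def by blast+
  have "set (cols K) \<subseteq> carrier_vec n" using cols_dim[of K] K by (metis carrier_matD(1))
  then have sub: "S \<subseteq> carrier_vec n" using SK by (rule order_trans[rotated])
  have "card S \<le> dim" by (rule li_le_dim(2)[OF fin_dim sub li])
  then show ?thesis using r dim_is_n by simp
qed

lemma rank_lt_orth:
  assumes K: "K \<in> carrier_mat n nc" and w: "w \<in> carrier_vec n" "w \<noteq> 0\<^sub>v n"
    and orth: "\<And>v. v \<in> set (cols K) \<Longrightarrow> w \<bullet> v = 0"
  shows "rank K < n"
proof (rule ccontr)
  assume "\<not> rank K < n"
  then have rn: "rank K = n" using rank_le_n[OF K] by simp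
  obtain S where S: "maximal S (\<lambda>T. T \<subseteq> set (cols K) \<and> lin_indpt T)"
    using max_indep_exists[OF K] by blast
  have r: "card S = n" using rank_card_indpt[OF K S] rn by simp
  have SK: "S \<subseteq> set (cols K)" and li: "lin_indpt S" using S unfolding maximal_def by blast+
  have "set (cols K) \<subseteq> carrier_vec n" using cols_dim[of K] K by (metis carrier_matD(1))
  then have sub: "S \<subseteq> carrier_vec n" using SK by (rule order_trans[rotated])
  have fin: "finite S" using SK finite_subset by blast
  obtain xs where xs: "set xs = S" "distinct xs" using finite_distinct_list[OF fin] by blast
  have lxs: "length xs = n" using xs r distinct_card by metis
  define C where "C = mat_of_cols n xs"
  have C: "C \<in> carrier_mat n n" unfolding C_def using lxs mat_of_cols_carrier(1) by metis
  have xsc: "set xs \<subseteq> carrier_vec n" using xs sub by simp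
  have cC: "cols C = xs" unfolding C_def using cols_mat_of_cols[OF xsc] .
  have "rank C = n" using lin_indpt_full_rank[OF C] cC xs li by simp
  then have dC: "det C \<noteq> 0" using det_rank_iff[OF C] by simp
  have CT: "transpose_mat C \<in> carrier_mat n n" using C by simp
  have "transpose_mat C *\<^sub>v w = 0\<^sub>v n"
  proof (rule eq_vecI)
    fix i assume "i < dim_vec (0\<^sub>v n)"
    then have i: "i < n" by simp
    have xi: "xs ! i \<in> set xs" using i lxs by simp
    have xic: "xs ! i \<in> carrier_vec n" using xi xsc by blast
    have "(transpose_mat C *\<^sub>v w) $ i = row (transpose_mat C) i \<bullet> w" using i C by simp
    also have "row (transpose_mat C) i = col C i" using i C by simp
    also have "col C i = xs ! i" unfolding C_def using col_mat_of_cols[of i xs n] i lxs xic by simp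
    also have "xs ! i \<bullet> w = w \<bullet> xs ! i" using comm_scalar_prod[OF xic w(1)] .
    also have "\<dots> = 0" using orth SK xs xi by blast
    finally show "(transpose_mat C *\<^sub>v w) $ i = 0\<^sub>v n $ i" using i by simp
  next
    show "dim_vec (transpose_mat C *\<^sub>v w) = dim_vec (0\<^sub>v n)" using C by simp
  qed
  then have "det (transpose_mat C) = 0" using det_0_iff_vec_prod_zero_field[OF CT] w by blast
  then show False using det_transpose[OF C] dC by simp
qed

lemma rank_full_sub:
  assumes K: "K \<in> carrier_mat n nc" and C: "C \<in> carrier_mat n n"
    and sub: "set (cols C) \<subseteq> set (cols K)"
    and ker: "\<And>v. v \<in> carrier_vec n \<Longrightarrow> C *\<^sub>v v = 0\<^sub>v n \<Longrightarrow> v = 0\<^sub>v n"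
  shows "rank K = n"
proof -
  have dC: "det C \<noteq> 0" using det_0_iff_vec_prod_zero_field[OF C] ker by blast
  then have rC: "rank C = n" using det_rank_iff[OF C] by simp
  have dist: "distinct (cols C)"
    using non_distinct_low_rank[OF C] rC by (metis less_irrefl)
  have li: "lin_indpt (set (cols C))" using full_rank_lin_indpt[OF C rC dist] .
  have "card (set (cols C)) = n" using distinct_card[OF dist] C by (metis cols_length carrier_matD(2))
  then have "n \<le> rank K" using rank_ge_card_indpt[OF K sub li] by simp
  then show ?thesis using rank_le_n[OF K] by simp
qed

end

lemma kalman_carrier:
  assumes A: "A \<in> carrier_mat n n"
  shows "kalman_mat A B \<in> carrier_mat n (dim_col (kalman_mat A B))"
proof (rule carrier_matI)
  show "dim_row (kalman_mat A B) = n" unfolding kalman_mat_def mat_of_cols_carrier(2) using A by (rule carrier_matD(1))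
qed (rule refl)

lemma kalman_cols:
  assumes A: "A \<in> carrier_mat n n" and B: "B \<in> carrier_mat n m"
  shows "set (cols (kalman_mat A B)) = {(A ^\<^sub>m k) *\<^sub>v col B i | k i. k < n \<and> i < m}"
proof -
  define L where "L = concat (map (\<lambda>k. cols ((A ^\<^sub>m k) * B)) [0..<n])"
  have dr: "dim_row A = n" using A by (rule carrier_matD(1))
  have Ak: "\<And>k. A ^\<^sub>m k \<in> carrier_mat n n" using A by (rule pow_carrier_mat)
  have colk: "\<And>k i. i < m \<Longrightarrow> col ((A ^\<^sub>m k) * B) i = (A ^\<^sub>m k) *\<^sub>v col B i"
    using col_mult2[OF Ak B] by blast
  have colsk: "set (cols ((A ^\<^sub>m k) * B)) = (\<lambda>i. (A ^\<^sub>m k) *\<^sub>v col B i) ` {0..<m}" for k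
  proof -
    have dc: "dim_col ((A ^\<^sub>m k) * B) = m" using B by (simp only: index_mult_mat(3) carrier_matD(2))
    have "set (cols ((A ^\<^sub>m k) * B)) = (\<lambda>i. col ((A ^\<^sub>m k) * B) i) ` {0..<m}"
      unfolding cols_def set_map set_upt dc by (rule refl)
    also have "\<dots> = (\<lambda>i. (A ^\<^sub>m k) *\<^sub>v col B i) ` {0..<m}"
      using colk by (intro image_cong) auto
    finally show ?thesis .
  qed
  have setL: "set L = {(A ^\<^sub>m k) *\<^sub>v col B i | k i. k < n \<and> i < m}"
  proof -
    have "set L = (\<Union>k\<in>{0..<n}. set (cols ((A ^\<^sub>m k) * B)))"
      unfolding L_def set_concat set_map set_upt image_image by (rule refl)
    also have "\<dots> = (\<Union>k\<in>{0..<n}. (\<lambda>i. (A ^\<^sub>m k) *\<^sub>v col B i) ` {0..<m})"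
      unfolding colsk by (rule refl)
    also have "\<dots> = {(A ^\<^sub>m k) *\<^sub>v col B i | k i. k < n \<and> i < m}" by fastforce
    finally show ?thesis .
  qed
  have "set L \<subseteq> carrier_vec n"
  proof
    fix v assume "v \<in> set L"
    then obtain k i where "v = (A ^\<^sub>m k) *\<^sub>v col B i" unfolding setL by blast
    then show "v \<in> carrier_vec n" using Ak[of k] by (metis mult_mat_vec_carrier col_dim carrier_matD(1) B)
  qed
  then have cL: "cols (mat_of_cols n L) = L" by (rule cols_mat_of_cols)
  have "kalman_mat A B = mat_of_cols n L" unfolding kalman_mat_def dr L_def by (rule refl)
  then show ?thesis using cL setL by simp
qed

lemma scal_pow:
  fixes A :: "'a::comm_ring_1 mat"
  assumes A: "A \<in> carrier_mat n n" and w: "w \<in> carrier_vec n"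
    and eig: "\<And>x. x \<in> carrier_vec n \<Longrightarrow> w \<bullet> (A *\<^sub>v x) = l * (w \<bullet> x)"
  shows "x \<in> carrier_vec n \<Longrightarrow> w \<bullet> ((A ^\<^sub>m k) *\<^sub>v x) = l ^ k * (w \<bullet> x)"
proof (induction k arbitrary: x)
  case 0
  then show ?case using A by simp
next
  case (Suc k)
  have Ak: "A ^\<^sub>m k \<in> carrier_mat n n" using A by (rule pow_carrier_mat)
  have "(A ^\<^sub>m Suc k) *\<^sub>v x = (A ^\<^sub>m k) *\<^sub>v (A *\<^sub>v x)"
    using assoc_mult_mat_vec[OF Ak A Suc.prems] by simp
  moreover have "A *\<^sub>v x \<in> carrier_vec n" using A Suc.prems by simp
  ultimately have "w \<bullet> ((A ^\<^sub>m Suc k) *\<^sub>v x) = l ^ k * (w \<bullet> (A *\<^sub>v x))" using Suc.IH by simp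
  also have "\<dots> = l ^ Suc k * (w \<bullet> x)" using eig[OF Suc.prems] by simp
  finally show ?case .
qed

lemma not_ctrb_cert:
  fixes A :: "'a::field mat"
  assumes A: "A \<in> carrier_mat n n" and B: "B \<in> carrier_mat n m"
    and w: "w \<in> carrier_vec n" "w \<noteq> 0\<^sub>v n"
    and eigA: "\<And>c. c < n \<Longrightarrow> (\<Sum>i\<in>{0..<n}. w $ i * A $$ (i, c)) = l * w $ c"
    and orthB: "\<And>j. j < m \<Longrightarrow> (\<Sum>i\<in>{0..<n}. w $ i * B $$ (i, j)) = 0"
  shows "\<not> controllable A B"
proof -
  have eig: "w \<bullet> (A *\<^sub>v x) = l * (w \<bullet> x)" if x: "x \<in> carrier_vec n" for x
  proof -
    have "w \<bullet> (A *\<^sub>v x) = (\<Sum>i\<in>{0..<n}. w $ i * (\<Sum>c\<in>{0..<n}. A $$ (i, c) * x $ c))"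
      using A x unfolding scalar_prod_def by (simp add: row_def scalar_prod_def)
    also have "\<dots> = (\<Sum>i\<in>{0..<n}. \<Sum>c\<in>{0..<n}. w $ i * A $$ (i, c) * x $ c)"
      by (simp add: sum_distrib_left mult.assoc)
    also have "\<dots> = (\<Sum>c\<in>{0..<n}. \<Sum>i\<in>{0..<n}. w $ i * A $$ (i, c) * x $ c)"
      by (rule sum.swap)
    also have "\<dots> = (\<Sum>c\<in>{0..<n}. (\<Sum>i\<in>{0..<n}. w $ i * A $$ (i, c)) * x $ c)"
      by (simp add: sum_distrib_right)
    also have "\<dots> = (\<Sum>c\<in>{0..<n}. l * w $ c * x $ c)"
      by (rule sum.cong, simp_all add: eigA)
    also have "\<dots> = l * (w \<bullet> x)" using x unfolding scalar_prod_def
      by (simp add: sum_distrib_left mult.assoc)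
    finally show ?thesis .
  qed
  let ?K = "kalman_mat A B"
  have K: "?K \<in> carrier_mat n (dim_col ?K)" by (rule kalman_carrier[OF A])
  have orth: "w \<bullet> v = 0" if v: "v \<in> set (cols ?K)" for v
  proof -
    obtain k i where ki: "v = (A ^\<^sub>m k) *\<^sub>v col B i" "i < m"
      using v kalman_cols[OF A B] by blast
    have cB: "col B i \<in> carrier_vec n" using B col_dim[of B i] by (metis carrier_matD(1))
    have "w \<bullet> col B i = (\<Sum>r\<in>{0..<n}. w $ r * B $$ (r, i))"
      using B ki(2) unfolding scalar_prod_def by simp
    also have "\<dots> = 0" using orthB[OF ki(2)] .
    finally have "w \<bullet> col B i = 0" .
    then show ?thesis using scal_pow[OF A w(1) eig cB, of k] ki(1) by simp
  qed
  have "vec_space.rank n ?K < n" using vec_space.rank_lt_orth[OF K w orth] by blast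
  then show ?thesis unfolding controllable_def using A by simp
qed

lemma ctrb_full:
  fixes A :: "'a::field mat"
  assumes A: "A \<in> carrier_mat n n" and B: "B \<in> carrier_mat n m"
    and C: "C \<in> carrier_mat n n"
    and colsC: "\<And>j. j < n \<Longrightarrow> \<exists>k i. k < n \<and> i < m \<and> col C j = (A ^\<^sub>m k) *\<^sub>v col B i"
    and ker: "\<And>v. v \<in> carrier_vec n \<Longrightarrow> C *\<^sub>v v = 0\<^sub>v n \<Longrightarrow> v = 0\<^sub>v n"
  shows "controllable A B"
proof -
  let ?K = "kalman_mat A B"
  have K: "?K \<in> carrier_mat n (dim_col ?K)" by (rule kalman_carrier[OF A])
  have sub: "set (cols C) \<subseteq> set (cols ?K)"
  proof
    fix v assume "v \<in> set (cols C)"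
    then obtain j where j: "j < n" "v = col C j" using C unfolding cols_def by auto
    then show "v \<in> set (cols ?K)" using colsC[OF j(1)] kalman_cols[OF A B] by auto
  qed
  have "vec_space.rank n ?K = n" using vec_space.rank_full_sub[OF K C sub ker] by blast
  then show ?thesis unfolding controllable_def using A by simp
qed



lemma sum6: "(\<Sum>i\<in>{0..<6::nat}. f i) = f 0 + f 1 + f 2 + f 3 + f 4 + (f 5 :: 'a::comm_monoid_add)"
proof -
  have "{0..<6::nat} = {0,1,2,3,4,5}" by auto
  then show ?thesis by (simp add: add.assoc)
qed

lemma A7e: "A7 $$ (0, 0) = (-1)" "A7 $$ (0, 1) = 0" "A7 $$ (0, 2) = 1" "A7 $$ (0, 3) = 0" "A7 $$ (0, 4) = 0" "A7 $$ (0, 5) = 0" "A7 $$ (1, 0) = 0" "A7 $$ (1, 1) = (-1)" "A7 $$ (1, 2) = 0" "A7 $$ (1, 3) = 0" "A7 $$ (1, 4) = 0" "A7 $$ (1, 5) = 0" "A7 $$ (2, 0) = 0" "A7 $$ (2, 1) = 0" "A7 $$ (2, 2) = 3" "A7 $$ (2, 3) = 0" "A7 $$ (2, 4) = 0" "A7 $$ (2, 5) = 0" "A7 $$ (3, 0) = 0" "A7 $$ (3, 1) = 0" "A7 $$ (3, 2) = 1" "A7 $$ (3, 3) = 4" "A7 $$ (3, 4) = 0" "A7 $$ (3, 5) = 0" "A7 $$ (4, 0) = 0" "A7 $$ (4, 1) = 0" "A7 $$ (4, 2) = 0" "A7 $$ (4, 3) = 0" "A7 $$ (4, 4) = 4"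 "A7 $$ (4, 5) = 0" "A7 $$ (5, 0) = 0" "A7 $$ (5, 1) = 0" "A7 $$ (5, 2) = 0" "A7 $$ (5, 3) = 0" "A7 $$ (5, 4) = 0" "A7 $$ (5, 5) = 4"
  by (simp_all add: A7_def mat_of_rows_list_def)

lemma B7e: "B7 $$ (0, 0) = 0" "B7 $$ (1, 0) = 1" "B7 $$ (2, 0) = 1" "B7 $$ (3, 0) = 0" "B7 $$ (4, 0) = 0" "B7 $$ (5, 0) = 1"
  by (simp_all add: B7_def mat_of_rows_list_def)

lemma A7s: "A7 $$ (0, 0) = (-1)" "A7 $$ (0, Suc 0) = 0" "A7 $$ (0, 2) = 1" "A7 $$ (0, 3) = 0" "A7 $$ (0, 4) = 0" "A7 $$ (0, 5) = 0" "A7 $$ (Suc 0, 0) = 0" "A7 $$ (Suc 0, Suc 0) = (-1)" "A7 $$ (Suc 0, 2) = 0" "A7 $$ (Suc 0, 3) = 0" "A7 $$ (Suc 0, 4) = 0" "A7 $$ (Suc 0, 5) = 0" "A7 $$ (2, 0) = 0" "A7 $$ (2, Suc 0) = 0" "A7 $$ (2, 2) = 3" "A7 $$ (2, 3) = 0" "A7 $$ (2, 4) = 0" "A7 $$ (2, 5) = 0" "A7 $$ (3, 0) = 0" "A7 $$ (3, Suc 0) = 0" "A7 $$ (3, 2) = 1" "A7 $$ (3, 3) = 4" "A7 $$ (3, 4) = 0" "A7 $$ (3, 5) = 0" "A7 $$ (4, 0) = 0" "A7 $$ (4, Suc 0) = 0" "A7 $$ (4, 2) = 0" "A7 $$ (4,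 3) = 0" "A7 $$ (4, 4) = 4" "A7 $$ (4, 5) = 0" "A7 $$ (5, 0) = 0" "A7 $$ (5, Suc 0) = 0" "A7 $$ (5, 2) = 0" "A7 $$ (5, 3) = 0" "A7 $$ (5, 4) = 0" "A7 $$ (5, 5) = 4"
  by (simp_all add: A7_def mat_of_rows_list_def)

lemma B7s: "B7 $$ (0, 0) = 0" "B7 $$ (Suc 0, 0) = 1" "B7 $$ (2, 0) = 1" "B7 $$ (3, 0) = 0" "B7 $$ (4, 0) = 0" "B7 $$ (5, 0) = 1"
  by (simp_all add: B7_def mat_of_rows_list_def)

lemma A7c: "A7 \<in> carrier_mat 6 6" by (rule carrier_matI) (simp_all add: A7_def mat_of_rows_list_def)
lemma B7c: "B7 \<in> carrier_mat 6 1" by (rule carrier_matI) (simp_all add: B7_def mat_of_rows_list_def)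

lemma vol6: "vec 6 (\<lambda>i. [wA, wB, wC, wD, wE, wF] ! i) $ 0 = wA"
  "vec 6 (\<lambda>i. [wA, wB, wC, wD, wE, wF] ! i) $ 1 = wB"
  "vec 6 (\<lambda>i. [wA, wB, wC, wD, wE, wF] ! i) $ 2 = wC"
  "vec 6 (\<lambda>i. [wA, wB, wC, wD, wE, wF] ! i) $ 3 = wD"
  "vec 6 (\<lambda>i. [wA, wB, wC, wD, wE, wF] ! i) $ 4 = wE"
  "vec 6 (\<lambda>i. [wA, wB, wC, wD, wE, wF] ! i) $ 5 = wF"
  by simp_all

lemma cert6:
  fixes dA dB :: "real mat"
  assumes dA: "dA \<in> carrier_mat 6 6" and dB: "dB \<in> carrier_mat 6 1"
    and nz: "wA \<noteq> 0 \<or> wB \<noteq> 0 \<or> wC \<noteq> 0 \<or> wD \<noteq> 0 \<or> wE \<noteq> 0 \<or> wF \<noteq> 0"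
    and e0: "wA * ((-1) + dA $$ (0, 0)) + wB * (0 + dA $$ (1, 0)) + wC * (0 + dA $$ (2, 0)) + wD * (0 + dA $$ (3, 0)) + wE * (0 + dA $$ (4, 0)) + wF * (0 + dA $$ (5, 0)) = l * wA"
    and e1: "wA * (0 + dA $$ (0, 1)) + wB * ((-1) + dA $$ (1, 1)) + wC * (0 + dA $$ (2, 1)) + wD * (0 + dA $$ (3, 1)) + wE * (0 + dA $$ (4, 1)) + wF * (0 + dA $$ (5, 1)) = l * wB"
    and e2: "wA * (1 + dA $$ (0, 2)) + wB * (0 + dA $$ (1, 2)) + wC * (3 + dA $$ (2, 2)) + wD * (1 + dA $$ (3, 2)) + wE * (0 + dA $$ (4, 2)) + wF * (0 + dA $$ (5, 2)) = l * wC"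
    and e3: "wA * (0 + dA $$ (0, 3)) + wB * (0 + dA $$ (1, 3)) + wC * (0 + dA $$ (2, 3)) + wD * (4 + dA $$ (3, 3)) + wE * (0 + dA $$ (4, 3)) + wF * (0 + dA $$ (5, 3)) = l * wD"
    and e4: "wA * (0 + dA $$ (0, 4)) + wB * (0 + dA $$ (1, 4)) + wC * (0 + dA $$ (2, 4)) + wD * (0 + dA $$ (3, 4)) + wE * (4 + dA $$ (4, 4)) + wF * (0 + dA $$ (5, 4)) = l * wE"
    and e5: "wA * (0 + dA $$ (0, 5)) + wB * (0 + dA $$ (1, 5)) + wC * (0 + dA $$ (2, 5)) + wD * (0 + dA $$ (3, 5)) + wE * (0 + dA $$ (4, 5)) + wF * (4 + dA $$ (5, 5)) = l * wF"
    and eB: "wA * (0 + dB $$ (0, 0)) + wB * (1 + dB $$ (1, 0)) + wC * (1 + dB $$ (2, 0)) + wD * (0 + dB $$ (3, 0)) + wE * (0 + dB $$ (4, 0)) + wF * (1 + dB $$ (5, 0)) = 0"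
  shows "\<not> controllable (A7 + dA) (B7 + dB)"
proof -
  let ?w = "vec 6 (\<lambda>i. [wA, wB, wC, wD, wE, wF] ! i) :: real vec"
  have Ac: "A7 + dA \<in> carrier_mat 6 6" using A7c dA by simp
  have Bc: "B7 + dB \<in> carrier_mat 6 1" using B7c dB by simp
  have wc: "?w \<in> carrier_vec 6" by (rule vec_carrier)
  have wnz: "?w \<noteq> 0\<^sub>v 6"
  proof
    assume h: "?w = 0\<^sub>v 6"
    have z: "?w $ k = 0" if "k < 6" for k
      using arg_cong[OF h, of "\<lambda>v. v $ k"] that by (simp only: index_zero_vec(1))
    have "?w $ 0 = 0" "?w $ 1 = 0" "?w $ 2 = 0" "?w $ 3 = 0" "?w $ 4 = 0" "?w $ 5 = 0"
      by (rule z, simp)+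
    then show False using nz unfolding vol6 by blast
  qed
  have Ae: "(A7 + dA) $$ (i, c) = A7 $$ (i, c) + dA $$ (i, c)" if "i < 6" "c < 6" for i c
    using that dA by simp
  have Be: "(B7 + dB) $$ (i, 0) = B7 $$ (i, 0) + dB $$ (i, 0)" if "i < 6" for i
    using that dB by simp
  have c0: "(0::nat) < 6" and c1: "(1::nat) < 6" and c2: "(2::nat) < 6" and c3: "(3::nat) < 6"
    and c4: "(4::nat) < 6" and c5: "(5::nat) < 6" by simp_all
  show ?thesis
  proof (rule not_ctrb_cert[OF Ac Bc wc wnz, of l])
    fix c :: nat assume c: "c < 6"
    then have "c = 0 \<or> c = 1 \<or> c = 2 \<or> c = 3 \<or> c = 4 \<or> c = 5" by linarith
    moreover
    have "(\<Sum>i\<in>{0..<6}. ?w $ i * (A7 + dA) $$ (i, 0)) = l * ?w $ 0"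
      unfolding sum6 vol6 Ae[OF c0 c0] Ae[OF c1 c0] Ae[OF c2 c0] Ae[OF c3 c0] Ae[OF c4 c0] Ae[OF c5 c0] by (simp only: A7e e0)
    moreover
    have "(\<Sum>i\<in>{0..<6}. ?w $ i * (A7 + dA) $$ (i, 1)) = l * ?w $ 1"
      unfolding sum6 vol6 Ae[OF c0 c1] Ae[OF c1 c1] Ae[OF c2 c1] Ae[OF c3 c1] Ae[OF c4 c1] Ae[OF c5 c1] by (simp only: A7e e1)
    moreover
    have "(\<Sum>i\<in>{0..<6}. ?w $ i * (A7 + dA) $$ (i, 2)) = l * ?w $ 2"
      unfolding sum6 vol6 Ae[OF c0 c2] Ae[OF c1 c2] Ae[OF c2 c2] Ae[OF c3 c2] Ae[OF c4 c2] Ae[OF c5 c2] by (simp only: A7e e2)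
    moreover
    have "(\<Sum>i\<in>{0..<6}. ?w $ i * (A7 + dA) $$ (i, 3)) = l * ?w $ 3"
      unfolding sum6 vol6 Ae[OF c0 c3] Ae[OF c1 c3] Ae[OF c2 c3] Ae[OF c3 c3] Ae[OF c4 c3] Ae[OF c5 c3] by (simp only: A7e e3)
    moreover
    have "(\<Sum>i\<in>{0..<6}. ?w $ i * (A7 + dA) $$ (i, 4)) = l * ?w $ 4"
      unfolding sum6 vol6 Ae[OF c0 c4] Ae[OF c1 c4] Ae[OF c2 c4] Ae[OF c3 c4] Ae[OF c4 c4] Ae[OF c5 c4] by (simp only: A7e e4)
    moreover
    have "(\<Sum>i\<in>{0..<6}. ?w $ i * (A7 + dA) $$ (i, 5)) = l * ?w $ 5"
      unfolding sum6 vol6 Ae[OF c0 c5] Ae[OF c1 c5] Ae[OF c2 c5] Ae[OF c3 c5] Ae[OF c4 c5] Ae[OF c5 c5] by (simp only: A7e e5)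
    ultimately show "(\<Sum>i\<in>{0..<6}. ?w $ i * (A7 + dA) $$ (i, c)) = l * ?w $ c" by blast
  next
    fix j :: nat assume "j < 1"
    then have j: "j = 0" by simp
    show "(\<Sum>i\<in>{0..<6}. ?w $ i * (B7 + dB) $$ (i, j)) = 0"
      unfolding j sum6 vol6 Be[OF c0] Be[OF c1] Be[OF c2] Be[OF c3] Be[OF c4] Be[OF c5] by (simp only: B7e eB)
  qed
qed
lemma cert1:
  fixes dA dB :: "real mat"
  assumes dA: "dA \<in> carrier_mat 6 6" and dB: "dB \<in> carrier_mat 6 1"
    and h0: "\<forall>c<6. dA $$ (2, c) = 0"
    and h1: "dB $$ (2, 0) = 0"
    and h2: "\<forall>c<6. dA $$ (3, c) = 0"
    and h3: "dB $$ (3, 0) = 0"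
    and h4: "\<forall>c<6. dA $$ (5, c) = 0"
    and h5: "dB $$ (5, 0) = 0"
  shows "\<not> controllable (A7 + dA) (B7 + dB)"
proof -
  have z: "dA $$ (2, 0) = 0" "dA $$ (2, 1) = 0" "dA $$ (2, 2) = 0" "dA $$ (2, 3) = 0" "dA $$ (2, 4) = 0" "dA $$ (2, 5) = 0" "dA $$ (3, 0) = 0" "dA $$ (3, 1) = 0" "dA $$ (3, 2) = 0" "dA $$ (3, 3) = 0" "dA $$ (3, 4) = 0" "dA $$ (3, 5) = 0" "dA $$ (5, 0) = 0" "dA $$ (5, 1) = 0" "dA $$ (5, 2) = 0" "dA $$ (5, 3) = 0" "dA $$ (5, 4) = 0" "dA $$ (5, 5) = 0" using h0 h1 h2 h3 h4 h5 by auto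
  show ?thesis
    apply (rule cert6[OF dA dB, where wA = "0" and wB = "0" and wC = "1" and wD = "1" and wE = "0" and wF = "-1" and l = "4"])
    subgoal using h0 h1 h2 h3 h4 h5 z by auto
    using h0 h1 h2 h3 h4 h5 z by (simp_all )
qed

lemma cert3:
  fixes dA dB :: "real mat"
  assumes dA: "dA \<in> carrier_mat 6 6" and dB: "dB \<in> carrier_mat 6 1"
    and h0: "\<forall>c<6. dA $$ (0, c) = 0"
    and h1: "dB $$ (0, 0) = 0"
    and h2: "\<forall>c<6. dA $$ (1, c) = 0"
    and h3: "dB $$ (1, 0) = 0"
    and h4: "\<forall>c<6. dA $$ (2, c) = 0"
    and h5: "dB $$ (2, 0) = 0"
  shows "\<not> controllable (A7 + dA) (B7 + dB)"
proof -
  have z: "dA $$ (0, 0) = 0" "dA $$ (0, 1) = 0" "dA $$ (0, 2) = 0" "dA $$ (0, 3) = 0" "dA $$ (0, 4) = 0" "dA $$ (0, 5) = 0" "dA $$ (1, 0) = 0" "dA $$ (1, 1) = 0" "dA $$ (1, 2) = 0" "dA $$ (1, 3) = 0" "dA $$ (1, 4) = 0" "dA $$ (1, 5) = 0" "dA $$ (2, 0) = 0" "dA $$ (2, 1) = 0" "dA $$ (2, 2) = 0" "dA $$ (2, 3) = 0" "dA $$ (2, 4) = 0" "dA $$ (2, 5) = 0" using h0 h1 h2 h3 h4 h5 by auto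
  show ?thesis
    apply (rule cert6[OF dA dB, where wA = "-4" and wB = "-1" and wC = "1" and wD = "0" and wE = "0" and wF = "0" and l = "-1"])
    subgoal using h0 h1 h2 h3 h4 h5 z by auto
    using h0 h1 h2 h3 h4 h5 z by (simp_all )
qed

lemma cert2:
  fixes dA dB :: "real mat"
  assumes dA: "dA \<in> carrier_mat 6 6" and dB: "dB \<in> carrier_mat 6 1"
    and h0: "\<forall>c<6. c \<noteq> 4 \<longrightarrow> dA $$ (4, c) = 0" and h1: "dB $$ (4, 0) = 0"
  shows "\<not> controllable (A7 + dA) (B7 + dB)"
proof -
  have z: "dA $$ (4, 0) = 0" "dA $$ (4, 1) = 0" "dA $$ (4, 2) = 0" "dA $$ (4, 3) = 0" "dA $$ (4, 5) = 0" using h0 by auto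
  show ?thesis
    apply (rule cert6[OF dA dB, where wA = 0 and wB = 0 and wC = 0 and wD = 0 and wE = 1 and wF = 0 and l = "4 + dA $$ (4, 4)"])
    subgoal using h1 z by auto
    using h1 z by (simp_all)
qed

lemma cert4:
  fixes dA dB :: "real mat" and s t :: real
  assumes dA: "dA \<in> carrier_mat 6 6" and dB: "dB \<in> carrier_mat 6 1"
    and h0: "\<forall>c<6. dA $$ (0, c) = 0"
    and h1: "dB $$ (0, 0) = 0"
    and h2: "\<forall>c<6. dA $$ (1, c) = 0"
    and h3: "dB $$ (1, 0) = 0"
    and h4: "\<forall>c<6. dA $$ (3, c) = 0"
    and h5: "dB $$ (3, 0) = 0"
    and h6: "\<forall>c<6. dA $$ (5, c) = 0"
    and h7: "dB $$ (5, 0) = 0"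
    and h8: "s * dA $$ (2, 3) + t * dA $$ (4, 3) = 0"
    and h9: "s * dA $$ (2, 4) + t * dA $$ (4, 4) = 0"
    and h10: "s * dA $$ (2, 5) + t * dA $$ (4, 5) = 0"
    and h11: "s \<noteq> 0 \<or> t \<noteq> 0"
  shows "\<not> controllable (A7 + dA) (B7 + dB)"
proof -
  have z: "dA $$ (0, 0) = 0" "dA $$ (0, 1) = 0" "dA $$ (0, 2) = 0" "dA $$ (0, 3) = 0" "dA $$ (0, 4) = 0" "dA $$ (0, 5) = 0" "dA $$ (1, 0) = 0" "dA $$ (1, 1) = 0" "dA $$ (1, 2) = 0" "dA $$ (1, 3) = 0" "dA $$ (1, 4) = 0" "dA $$ (1, 5) = 0" "dA $$ (3, 0) = 0" "dA $$ (3, 1) = 0" "dA $$ (3, 2) = 0" "dA $$ (3, 3) = 0" "dA $$ (3, 4) = 0" "dA $$ (3, 5) = 0" "dA $$ (5, 0) = 0" "dA $$ (5, 1) = 0" "dA $$ (5, 2) = 0" "dA $$ (5, 3) = 0" "dA $$ (5, 4) = 0" "dA $$ (5, 5) = 0" using h0 h1 h2 h3 h4 h5 h6 h7 h8 h9 h10 h11 by auto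
  show ?thesis
    apply (rule cert6[OF dA dB, where wA = "(s * dA $$ (2, 0) + t * dA $$ (4, 0)) / 5" and wB = "(s * dA $$ (2, 1) + t * dA $$ (4, 1)) / 5" and wC = "s" and wD = "s - (s * dA $$ (2, 0) + t * dA $$ (4, 0)) / 5 - s * dA $$ (2, 2) - t * dA $$ (4, 2)" and wE = "t" and wF = "- ((s * dA $$ (2, 1) + t * dA $$ (4, 1)) / 5) - s - s * dB $$ (2, 0) - t * dB $$ (4, 0)" and l = "4"])
    subgoal using h0 h1 h2 h3 h4 h5 h6 h7 h8 h9 h10 h11 z by auto
    using h0 h1 h2 h3 h4 h5 h6 h7 h8 h9 h10 h11 z by (simp_all add: field_simps)
qed

lemma cert5:
  fixes dA dB :: "real mat"
  assumes dA: "dA \<in> carrier_mat 6 6" and dB: "dB \<in> carrier_mat 6 1"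
    and h0: "\<forall>c<6. dA $$ (0, c) = 0"
    and h1: "dB $$ (0, 0) = 0"
    and h2: "\<forall>c<6. dA $$ (1, c) = 0"
    and h3: "dB $$ (1, 0) = 0"
    and h4: "\<forall>c<6. dA $$ (3, c) = 0"
    and h5: "dB $$ (3, 0) = 0"
    and h6: "\<forall>c<6. dA $$ (5, c) = 0"
    and h7: "dB $$ (5, 0) = 0"
    and h8: "dA $$ (2, 0) = 0"
    and h9: "dA $$ (2, 1) = 0"
    and h10: "dA $$ (2, 4) * dA $$ (4, 0) = 0"
    and h11: "dA $$ (2, 4) * dA $$ (4, 1) = 0"
    and h12: "dA $$ (2, 4) * dA $$ (4, 4) = 0"
  shows "\<not> controllable (A7 + dA) (B7 + dB)"
proof -
  have z: "dA $$ (0, 0) = 0" "dA $$ (0, 1) = 0" "dA $$ (0, 2) = 0" "dA $$ (0, 3) = 0" "dA $$ (0, 4) = 0" "dA $$ (0, 5) = 0" "dA $$ (1, 0) = 0" "dA $$ (1, 1) = 0" "dA $$ (1, 2) = 0" "dA $$ (1, 3) = 0" "dA $$ (1, 4) = 0" "dA $$ (1, 5) = 0" "dA $$ (3, 0) = 0" "dA $$ (3, 1) = 0" "dA $$ (3, 2) = 0" "dA $$ (3, 3) = 0" "dA $$ (3, 4) = 0" "dA $$ (3, 5) = 0" "dA $$ (5, 0) = 0" "dA $$ (5, 1) = 0" "dA $$ (5, 2) = 0" "dA $$ (5, 3) = 0" "dA $$ (5, 4) = 0" "dA $$ (5, 5) = 0" using h0 h1 h2 h3 h4 h5 h6 h7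 h8 h9 h10 h11 h12 by auto
  show ?thesis
    apply (rule cert6[OF dA dB, where wA = "-4 - (- (dA $$ (2, 3) + (- dA $$ (2, 4) / 5) * dA $$ (4, 3)) / 5) - dA $$ (2, 2) - dA $$ (4, 2) * (- dA $$ (2, 4) / 5)" and wB = "-1 - (- (dA $$ (2, 5) + (- dA $$ (2, 4) / 5) * dA $$ (4, 5)) / 5) - dB $$ (2, 0) - dB $$ (4, 0) * (- dA $$ (2, 4) / 5)" and wC = "1" and wD = "(- (dA $$ (2, 3) + (- dA $$ (2, 4) / 5) * dA $$ (4, 3)) / 5)" and wE = "(- dA $$ (2, 4) / 5)" and wF = "(- (dA $$ (2, 5) + (- dA $$ (2, 4) / 5) * dA $$ (4, 5)) / 5)" and l = "-1"])
    subgoal using h0 h1 h2 h3 h4 h5 h6 h7 h8 h9 h10 h11 h12 z by auto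
    using h0 h1 h2 h3 h4 h5 h6 h7 h8 h9 h10 h11 h12 z by (simp_all add: field_simps)
qed

lemma rows24:
  fixes dA dB :: "real mat"
  assumes dA: "dA \<in> carrier_mat 6 6" and dB: "dB \<in> carrier_mat 6 1"
    and HA: "\<forall>i<6. \<forall>c<6. (i, c) \<noteq> (2, k) \<longrightarrow> (i, c) \<noteq> (4, j) \<longrightarrow> dA $$ (i, c) = 0"
    and HB: "\<forall>i<6. (i, 6) \<noteq> (2, k) \<longrightarrow> (i, 6) \<noteq> (4, j) \<longrightarrow> dB $$ (i, 0) = 0"
  shows "\<not> controllable (A7 + dA) (B7 + dB)"
proof -
  have r0: "\<forall>c<6. dA $$ (0, c) = 0" and r1: "\<forall>c<6. dA $$ (1, c) = 0"
    and r3: "\<forall>c<6. dA $$ (3, c) = 0" and r5: "\<forall>c<6. dA $$ (5, c) = 0"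
    using HA by auto
  have b0: "dB $$ (0, 0) = 0" and b1: "dB $$ (1, 0) = 0" and b3: "dB $$ (3, 0) = 0"
    and b5: "dB $$ (5, 0) = 0" using HB by auto
  note base = cert4[OF dA dB r0 b0 r1 b1 r3 b3 r5 b5]
  note base5 = cert5[OF dA dB r0 b0 r1 b1 r3 b3 r5 b5]
  consider "k \<notin> {3, 4, 5}" | "j \<notin> {3, 4, 5}" | "k = j" "k \<in> {3, 4, 5}" | "k \<in> {3, 5}"
    | "k = 4" "j \<in> {3, 5}" by blast
  then show ?thesis
  proof cases
    case 1
    then have "dA $$ (2, 3) = 0" "dA $$ (2, 4) = 0" "dA $$ (2, 5) = 0" using HA by auto
    then show ?thesis by (intro base[where s = 1 and t = 0]) auto
  next
    case 2
    then have "dA $$ (4, 3) = 0" "dA $$ (4, 4) = 0" "dA $$ (4, 5) = 0" using HA by auto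
    then show ?thesis by (intro base[where s = 0 and t = 1]) auto
  next
    case 3
    show ?thesis
    proof (cases "dA $$ (2, k) = 0")
      case True
      then have "dA $$ (2, 3) = 0" "dA $$ (2, 4) = 0" "dA $$ (2, 5) = 0" using HA 3 by auto
      then show ?thesis by (intro base[where s = 1 and t = 0]) auto
    next
      case False
      from 3 consider "k = 3" | "k = 4" | "k = 5" by blast
      then show ?thesis
      proof cases
        case 1
        then have "dA $$ (2, 4) = 0" "dA $$ (2, 5) = 0" "dA $$ (4, 4) = 0" "dA $$ (4, 5) = 0"
          using HA 3 by auto
        then show ?thesis using False 1
          by (intro base[where s = "dA $$ (4, 3)" and t = "- dA $$ (2, 3)"]) (auto simp: mult.commute)
      next
        case 2
        then have "dA $$ (2, 3) = 0" "dA $$ (2, 5) = 0" "dA $$ (4, 3) = 0" "dA $$ (4, 5) = 0"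
          using HA 3 by auto
        then show ?thesis using False 2
          by (intro base[where s = "dA $$ (4, 4)" and t = "- dA $$ (2, 4)"]) (auto simp: mult.commute)
      next
        case 5: 3
        then have "dA $$ (2, 3) = 0" "dA $$ (2, 4) = 0" "dA $$ (4, 3) = 0" "dA $$ (4, 4) = 0"
          using HA 3 by auto
        then show ?thesis using False 5
          by (intro base[where s = "dA $$ (4, 5)" and t = "- dA $$ (2, 5)"]) (auto simp: mult.commute)
      qed
    qed
  next
    case 4
    then have "dA $$ (2, 0) = 0" "dA $$ (2, 1) = 0" "dA $$ (2, 4) = 0" using HA by auto
    then show ?thesis by (intro base5) auto
  next
    case 5
    then have "dA $$ (2, 0) = 0" "dA $$ (2, 1) = 0" "dA $$ (4, 0) = 0" "dA $$ (4, 1) = 0"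
      "dA $$ (4, 4) = 0" using HA by auto
    then show ?thesis by (intro base5) auto
  qed
qed

lemma card_le2_sub:
  assumes "finite P" "card P \<le> 2"
  shows "\<exists>p q. P \<subseteq> {p, q}"
proof (cases "P = {}")
  case True then show ?thesis by blast
next
  case False
  then obtain p where p: "p \<in> P" by blast
  have "card (P - {p}) \<le> Suc 0" using assms p by (simp add: card_Diff_singleton)
  then have "\<forall>x\<in>P - {p}. \<forall>y\<in>P - {p}. x = y" using assms(1) by (simp add: card_le_Suc0_iff_eq)
  then show ?thesis using p by blast
qed

lemma lower:
  fixes dA dB :: "real mat"
  assumes dA: "dA \<in> carrier_mat 6 6" and dB: "dB \<in> carrier_mat 6 1"
    and nn: "nnz dA + nnz dB \<le> 2"
  shows "\<not> controllable (A7 + dA) (B7 + dB)"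
proof -
  define PA where "PA = {(i, j). i < 6 \<and> j < 6 \<and> dA $$ (i, j) \<noteq> 0}"
  define PB where "PB = {(i, j). i < 6 \<and> j < 1 \<and> dB $$ (i, j) \<noteq> 0}"
  have cA: "nnz dA = card PA" unfolding nnz_def PA_def using dA by simp
  have cB: "nnz dB = card PB" unfolding nnz_def PB_def using dB by simp
  define P where "P = PA \<union> (\<lambda>(i, j). (i, 6::nat)) ` PB"
  have fA: "finite PA" unfolding PA_def
    by (rule finite_subset[of _ "{0..<6} \<times> {0..<6}"]) auto
  have fB: "finite PB" unfolding PB_def
    by (rule finite_subset[of _ "{0..<6} \<times> {0..<1}"]) auto
  have fP: "finite P" unfolding P_def using fA fB by simp
  have "card P \<le> card PA + card ((\<lambda>(i, j). (i, 6::nat)) ` PB)" unfolding P_def by (rule card_Un_le)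
  also have "\<dots> \<le> card PA + card PB" using card_image_le[OF fB] by simp
  finally have "card P \<le> 2" using nn cA cB by simp
  then obtain p q where pq: "P \<subseteq> {p, q}" using card_le2_sub[OF fP] by blast
  have HA0: "\<forall>i<6. \<forall>c<6. (i, c) \<noteq> p \<longrightarrow> (i, c) \<noteq> q \<longrightarrow> dA $$ (i, c) = 0"
  proof (intro allI impI)
    fix i c assume "i < 6" "c < 6" "(i, c) \<noteq> p" "(i, c) \<noteq> q"
    then show "dA $$ (i, c) = 0" using pq unfolding P_def PA_def by blast
  qed
  have HB0: "\<forall>i<6. (i, 6) \<noteq> p \<longrightarrow> (i, 6) \<noteq> q \<longrightarrow> dB $$ (i, 0) = 0"
  proof (intro allI impI)
    fix i assume i: "i < 6" "(i, 6) \<noteq> p" "(i, 6) \<noteq> q"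
    show "dB $$ (i, 0) = 0"
    proof (rule ccontr)
      assume "dB $$ (i, 0) \<noteq> 0"
      then have "(i, 0) \<in> PB" unfolding PB_def using i by simp
      then have "(i, 6) \<in> P" unfolding P_def by force
      then show False using pq i by blast
    qed
  qed
  obtain r1 c1 where p: "p = (r1, c1)" by (cases p)
  obtain r2 c2 where q: "q = (r2, c2)" by (cases q)
  note HA = HA0[unfolded p q] and HB = HB0[unfolded p q]
  consider "r1 \<notin> {2, 3, 5} \<and> r2 \<notin> {2, 3, 5}" | "r1 \<noteq> 4 \<and> r2 \<noteq> 4"
    | "r1 \<notin> {0, 1, 2} \<and> r2 \<notin> {0, 1, 2}" | "r1 = 2 \<and> r2 = 4" | "r1 = 4 \<and> r2 = 2"
    by (cases "r1 = 4"; cases "r2 = 4"; cases "r1 < 2"; cases "r2 < 2") auto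
  then show ?thesis
  proof cases
    case 1
    have "\<forall>c<6. dA $$ (2, c) = 0" "\<forall>c<6. dA $$ (3, c) = 0" "\<forall>c<6. dA $$ (5, c) = 0"
      "dB $$ (2, 0) = 0" "dB $$ (3, 0) = 0" "dB $$ (5, 0) = 0" using HA HB 1 by auto
    then show ?thesis by (intro cert1[OF dA dB]) auto
  next
    case 2
    have "\<forall>c<6. c \<noteq> 4 \<longrightarrow> dA $$ (4, c) = 0" "dB $$ (4, 0) = 0" using HA HB 2 by auto
    then show ?thesis by (intro cert2[OF dA dB]) auto
  next
    case 3
    have "\<forall>c<6. dA $$ (0, c) = 0" "\<forall>c<6. dA $$ (1, c) = 0" "\<forall>c<6. dA $$ (2, c) = 0"
      "dB $$ (0, 0) = 0" "dB $$ (1, 0) = 0" "dB $$ (2, 0) = 0" using HA HB 3 by auto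
    then show ?thesis by (intro cert3[OF dA dB]) auto
  next
    case 4
    show ?thesis
      by (rule rows24[OF dA dB, of c1 c2]) (use HA HB 4 in auto)
  next
    case 5
    show ?thesis
      by (rule rows24[OF dA dB, of c2 c1]) (use HA HB 5 in auto)
  qed
qed


lemma pow_comm:
  assumes A: "A \<in> carrier_mat n n"
  shows "A ^\<^sub>m k * A = A * A ^\<^sub>m k"
proof (induction k)
  case 0 then show ?case using A by simp
next
  case (Suc k)
  have Ak: "A ^\<^sub>m k \<in> carrier_mat n n" using A by simp
  have "A ^\<^sub>m Suc k * A = (A ^\<^sub>m k * A) * A" by simp
  also have "\<dots> = (A * A ^\<^sub>m k) * A" using Suc.IH by simp
  also have "\<dots> = A * (A ^\<^sub>m k * A)" using assoc_mult_mat[OF A Ak A] .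
  also have "\<dots> = A * A ^\<^sub>m Suc k" by simp
  finally show ?case .
qed

lemma pow_mv:
  assumes A: "A \<in> carrier_mat n n" and v: "v \<in> carrier_vec n"
  shows "(A ^\<^sub>m Suc k) *\<^sub>v v = A *\<^sub>v ((A ^\<^sub>m k) *\<^sub>v v)"
proof -
  have Ak: "A ^\<^sub>m k \<in> carrier_mat n n" using A by simp
  have "A ^\<^sub>m Suc k = A * A ^\<^sub>m k" using pow_comm[OF A, of k] by simp
  then show ?thesis using assoc_mult_mat_vec[OF A Ak v] by simp
qed

lemma pow0_mv:
  assumes A: "A \<in> carrier_mat n n" and v: "v \<in> carrier_vec n"
  shows "(A ^\<^sub>m 0) *\<^sub>v v = v"
  using A v by simp

lemma mv6:
  fixes v :: "real vec"
  assumes v: "v \<in> carrier_vec 6" and r: "r < 6"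
  shows "(mat_of_cols 6 [vec 6 (\<lambda>i. L0 ! i), vec 6 (\<lambda>i. L1 ! i), vec 6 (\<lambda>i. L2 ! i),
     vec 6 (\<lambda>i. L3 ! i), vec 6 (\<lambda>i. L4 ! i), vec 6 (\<lambda>i. L5 ! i)] *\<^sub>v v) $ r =
     L0 ! r * v $ 0 + L1 ! r * v $ 1 + L2 ! r * v $ 2 + L3 ! r * v $ 3 + L4 ! r * v $ 4 + L5 ! r * v $ 5"
proof -
  have dv: "dim_vec v = 6" using v by simp
  have "(mat_of_cols 6 [vec 6 (\<lambda>i. L0 ! i), vec 6 (\<lambda>i. L1 ! i), vec 6 (\<lambda>i. L2 ! i),
     vec 6 (\<lambda>i. L3 ! i), vec 6 (\<lambda>i. L4 ! i), vec 6 (\<lambda>i. L5 ! i)] *\<^sub>v v) $ r =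
     (\<Sum>j\<in>{0..<6}. [vec 6 (\<lambda>i. L0 ! i), vec 6 (\<lambda>i. L1 ! i), vec 6 (\<lambda>i. L2 ! i),
     vec 6 (\<lambda>i. L3 ! i), vec 6 (\<lambda>i. L4 ! i), vec 6 (\<lambda>i. L5 ! i)] ! j $ r * v $ j)"
    using r dv by (simp add: mat_of_cols_def scalar_prod_def row_def)
  also have "\<dots> = L0 ! r * v $ 0 + L1 ! r * v $ 1 + L2 ! r * v $ 2 + L3 ! r * v $ 3 + L4 ! r * v $ 4 + L5 ! r * v $ 5"
    unfolding sum6 using r by simp
  finally show ?thesis .
qed

lemma vec6_eq0:
  fixes v :: "real vec"
  assumes v: "v \<in> carrier_vec 6" and z: "v $ 0 = 0" "v $ 1 = 0" "v $ 2 = 0" "v $ 3 = 0" "v $ 4 = 0" "v $ 5 = 0"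
  shows "v = 0\<^sub>v 6"
proof (rule eq_vecI)
  fix i assume "i < dim_vec (0\<^sub>v 6 :: real vec)"
  then have "i = 0 \<or> i = 1 \<or> i = 2 \<or> i = 3 \<or> i = 4 \<or> i = 5" by auto
  then show "v $ i = 0\<^sub>v 6 $ i" using z by auto
qed (use v in simp)

lemma vb_eq: "col B7 0 = vec 6 (\<lambda>i. [0, 1, 1, 0, 0, 1] ! i)"
proof (rule eq_vecI)
  have d: "dim_row B7 = 6" using B7c by simp
  fix i assume "i < dim_vec (vec 6 (\<lambda>i. [0::real, 1, 1, 0, 0, 1] ! i))"
  then have "i = 0 \<or> i = 1 \<or> i = 2 \<or> i = 3 \<or> i = 4 \<or> i = 5" by auto
  then show "col B7 0 $ i = vec 6 (\<lambda>i. [0, 1, 1, 0, 0, 1] ! i) $ i"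
    using d by (auto simp: col_def B7e B7s)
qed (use B7c in simp)

lemma mulA7:
  "A7 *\<^sub>v vec 6 (\<lambda>i. [x0, x1, x2, x3, x4, x5] ! i) = vec 6 (\<lambda>i. ([(-1) * x0 + 0 * x1 + 1 * x2 + 0 * x3 + 0 * x4 + 0 * x5, 0 * x0 + (-1) * x1 + 0 * x2 + 0 * x3 + 0 * x4 + 0 * x5, 0 * x0 + 0 * x1 + 3 * x2 + 0 * x3 + 0 * x4 + 0 * x5, 0 * x0 + 0 * x1 + 1 * x2 + 4 * x3 + 0 * x4 + 0 * x5, 0 * x0 + 0 * x1 + 0 * x2 + 0 * x3 + 4 * x4 + 0 * x5, 0 * x0 + 0 * x1 + 0 * x2 + 0 * x3 + 0 * x4 + 4 * x5] :: real list) ! i)"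
proof (rule eq_vecI)
  fix i assume "i < dim_vec (vec 6 (\<lambda>i. ([(-1) * x0 + 0 * x1 + 1 * x2 + 0 * x3 + 0 * x4 + 0 * x5, 0 * x0 + (-1) * x1 + 0 * x2 + 0 * x3 + 0 * x4 + 0 * x5, 0 * x0 + 0 * x1 + 3 * x2 + 0 * x3 + 0 * x4 + 0 * x5, 0 * x0 + 0 * x1 + 1 * x2 + 4 * x3 + 0 * x4 + 0 * x5, 0 * x0 + 0 * x1 + 0 * x2 + 0 * x3 + 4 * x4 + 0 * x5, 0 * x0 + 0 * x1 + 0 * x2 + 0 * x3 + 0 * x4 + 4 * x5] :: real list) ! i))"
  then have i: "i < 6" by simp
  have "(A7 *\<^sub>v vec 6 (\<lambda>i. [x0, x1, x2, x3, x4, x5] ! i)) $ i =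
    (\<Sum>j\<in>{0..<6}. (A7) $$ (i, j) * [x0, x1, x2, x3, x4, x5] ! j)"
    using i A7c[THEN carrier_matD(1)] A7c[THEN carrier_matD(2)] by (simp add: scalar_prod_def row_def)
  also have "\<dots> = ([(-1) * x0 + 0 * x1 + 1 * x2 + 0 * x3 + 0 * x4 + 0 * x5, 0 * x0 + (-1) * x1 + 0 * x2 + 0 * x3 + 0 * x4 + 0 * x5, 0 * x0 + 0 * x1 + 3 * x2 + 0 * x3 + 0 * x4 + 0 * x5, 0 * x0 + 0 * x1 + 1 * x2 + 4 * x3 + 0 * x4 + 0 * x5, 0 * x0 + 0 * x1 + 0 * x2 + 0 * x3 + 4 * x4 + 0 * x5, 0 * x0 + 0 * x1 + 0 * x2 + 0 * x3 + 0 * x4 + 4 * x5] :: real list) ! i"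
  proof -
    have "i = 0 \<or> i = 1 \<or> i = 2 \<or> i = 3 \<or> i = 4 \<or> i = 5" using i by auto
    then show ?thesis unfolding sum6 by (auto simp: A7e A7s)
  qed
  finally show "(A7 *\<^sub>v vec 6 (\<lambda>i. [x0, x1, x2, x3, x4, x5] ! i)) $ i = vec 6 (\<lambda>i. ([(-1) * x0 + 0 * x1 + 1 * x2 + 0 * x3 + 0 * x4 + 0 * x5, 0 * x0 + (-1) * x1 + 0 * x2 + 0 * x3 + 0 * x4 + 0 * x5, 0 * x0 + 0 * x1 + 3 * x2 + 0 * x3 + 0 * x4 + 0 * x5, 0 * x0 + 0 * x1 + 1 * x2 + 4 * x3 + 0 * x4 + 0 * x5, 0 * x0 + 0 * x1 + 0 * x2 + 0 * x3 + 4 * x4 + 0 * x5, 0 * x0 + 0 * x1 + 0 * x2 + 0 * x3 + 0 * x4 + 4 * x5] :: real list) ! i) $ i"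
    using i by simp
next
  show "dim_vec (A7 *\<^sub>v vec 6 (\<lambda>i. [x0, x1, x2, x3, x4, x5] ! i)) = dim_vec (vec 6 (\<lambda>i. ([(-1) * x0 + 0 * x1 + 1 * x2 + 0 * x3 + 0 * x4 + 0 * x5, 0 * x0 + (-1) * x1 + 0 * x2 + 0 * x3 + 0 * x4 + 0 * x5, 0 * x0 + 0 * x1 + 3 * x2 + 0 * x3 + 0 * x4 + 0 * x5, 0 * x0 + 0 * x1 + 1 * x2 + 4 * x3 + 0 * x4 + 0 * x5, 0 * x0 + 0 * x1 + 0 * x2 + 0 * x3 + 4 * x4 + 0 * x5, 0 * x0 + 0 * x1 + 0 * x2 + 0 * x3 + 0 * x4 + 4 * x5] :: real list) ! i))"
    using A7c[THEN carrier_matD(1)] by simp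
qed

definition dA0 :: "real mat" where
  "dA0 = mat 6 6 (\<lambda>(i, j). if (i, j) = (0, 0) \<or> (i, j) = (2, 3) \<or> (i, j) = (4, 5) then 1 else 0)"

lemma dA0c: "dA0 \<in> carrier_mat 6 6" unfolding dA0_def by simp

lemma A2c: "A7 + dA0 \<in> carrier_mat 6 6" using A7c dA0c by simp

lemma A2e: "(A7 + dA0) $$ (0, 0) = 0" "(A7 + dA0) $$ (0, 1) = 0" "(A7 + dA0) $$ (0, 2) = 1" "(A7 + dA0) $$ (0, 3) = 0" "(A7 + dA0) $$ (0, 4) = 0" "(A7 + dA0) $$ (0, 5) = 0" "(A7 + dA0) $$ (1, 0) = 0" "(A7 + dA0) $$ (1, 1) = (-1)" "(A7 + dA0) $$ (1, 2) = 0" "(A7 + dA0) $$ (1, 3) = 0" "(A7 + dA0) $$ (1, 4) = 0" "(A7 + dA0) $$ (1, 5) = 0" "(A7 + dA0) $$ (2, 0) = 0" "(A7 + dA0) $$ (2, 1) = 0" "(A7 + dA0) $$ (2, 2) = 3" "(A7 + dA0) $$ (2, 3) = 1" "(A7 + dA0) $$ (2, 4) = 0" "(A7 + dA0) $$ (2, 5) = 0" "(A7 + dA0) $$ (3, 0) = 0" "(A7 + dA0) $$ (3, 1) = 0" "(A7 + dA0) $$ (3, 2) = 1" "(A7 + dA0) $$ (3, 3) = 4" "(A7 + dA0) $$ (3, 4) = 0" "(A7 + dA0) $$ (3, 5) = 0" "(A7 + dA0) $$ (4, 0) = 0" "(A7 + dA0) $$ (4, 1) = 0" "(A7 + dA0)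 $$ (4, 2) = 0" "(A7 + dA0) $$ (4, 3) = 0" "(A7 + dA0) $$ (4, 4) = 4" "(A7 + dA0) $$ (4, 5) = 1" "(A7 + dA0) $$ (5, 0) = 0" "(A7 + dA0) $$ (5, 1) = 0" "(A7 + dA0) $$ (5, 2) = 0" "(A7 + dA0) $$ (5, 3) = 0" "(A7 + dA0) $$ (5, 4) = 0" "(A7 + dA0) $$ (5, 5) = 4"
  using dA0c by (simp_all add: A7s A7e dA0_def)

lemma A2s: "(A7 + dA0) $$ (0, 0) = 0" "(A7 + dA0) $$ (0, Suc 0) = 0" "(A7 + dA0) $$ (0, 2) = 1" "(A7 + dA0) $$ (0, 3) = 0" "(A7 + dA0) $$ (0, 4) = 0" "(A7 + dA0) $$ (0, 5) = 0" "(A7 + dA0) $$ (Suc 0, 0) = 0" "(A7 + dA0) $$ (Suc 0, Suc 0) = (-1)" "(A7 + dA0) $$ (Suc 0, 2) = 0" "(A7 + dA0) $$ (Suc 0, 3) = 0" "(A7 + dA0) $$ (Suc 0, 4) = 0" "(A7 + dA0) $$ (Suc 0, 5) = 0" "(A7 + dA0) $$ (2, 0) = 0" "(A7 + dA0) $$ (2, Suc 0) = 0" "(A7 + dA0) $$ (2, 2) = 3" "(A7 + dA0) $$ (2, 3) = 1" "(A7 + dA0) $$ (2, 4) = 0" "(A7 + dA0) $$ (2, 5) = 0" "(A7 + dA0) $$ (3, 0) = 0" "(A7 + dA0) $$ (3, Suc 0) = 0" "(A7 + dA0) $$ (3, 2) = 1" "(A7 + dA0) $$ (3, 3) = 4"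 "(A7 + dA0) $$ (3, 4) = 0" "(A7 + dA0) $$ (3, 5) = 0" "(A7 + dA0) $$ (4, 0) = 0" "(A7 + dA0) $$ (4, Suc 0) = 0" "(A7 + dA0) $$ (4, 2) = 0" "(A7 + dA0) $$ (4, 3) = 0" "(A7 + dA0) $$ (4, 4) = 4" "(A7 + dA0) $$ (4, 5) = 1" "(A7 + dA0) $$ (5, 0) = 0" "(A7 + dA0) $$ (5, Suc 0) = 0" "(A7 + dA0) $$ (5, 2) = 0" "(A7 + dA0) $$ (5, 3) = 0" "(A7 + dA0) $$ (5, 4) = 0" "(A7 + dA0) $$ (5, 5) = 4"
  using dA0c by (simp_all add: A7s A7e dA0_def)

lemma mulA2:
  "(A7 + dA0) *\<^sub>v vec 6 (\<lambda>i. [x0, x1, x2, x3, x4, x5] ! i) = vec 6 (\<lambda>i. ([0 * x0 + 0 * x1 + 1 * x2 + 0 * x3 + 0 * x4 + 0 * x5, 0 * x0 + (-1) * x1 + 0 * x2 + 0 * x3 + 0 * x4 + 0 * x5, 0 * x0 + 0 * x1 + 3 * x2 + 1 * x3 + 0 * x4 + 0 * x5, 0 * x0 + 0 * x1 + 1 * x2 + 4 * x3 + 0 * x4 + 0 * x5, 0 * x0 + 0 * x1 + 0 * x2 + 0 * x3 + 4 * x4 + 1 * x5, 0 * x0 + 0 * x1 + 0 * x2 + 0 * x3 + 0 * x4 + 4 * x5] :: real list) ! i)"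
proof (rule eq_vecI)
  fix i assume "i < dim_vec (vec 6 (\<lambda>i. ([0 * x0 + 0 * x1 + 1 * x2 + 0 * x3 + 0 * x4 + 0 * x5, 0 * x0 + (-1) * x1 + 0 * x2 + 0 * x3 + 0 * x4 + 0 * x5, 0 * x0 + 0 * x1 + 3 * x2 + 1 * x3 + 0 * x4 + 0 * x5, 0 * x0 + 0 * x1 + 1 * x2 + 4 * x3 + 0 * x4 + 0 * x5, 0 * x0 + 0 * x1 + 0 * x2 + 0 * x3 + 4 * x4 + 1 * x5, 0 * x0 + 0 * x1 + 0 * x2 + 0 * x3 + 0 * x4 + 4 * x5] :: real list) ! i))"
  then have i: "i < 6" by simp
  have "((A7 + dA0) *\<^sub>v vec 6 (\<lambda>i. [x0, x1, x2, x3, x4, x5] ! i)) $ i =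
    (\<Sum>j\<in>{0..<6}. ((A7 + dA0)) $$ (i, j) * [x0, x1, x2, x3, x4, x5] ! j)"
    using i A2c[THEN carrier_matD(1)] A2c[THEN carrier_matD(2)] by (simp add: scalar_prod_def row_def)
  also have "\<dots> = ([0 * x0 + 0 * x1 + 1 * x2 + 0 * x3 + 0 * x4 + 0 * x5, 0 * x0 + (-1) * x1 + 0 * x2 + 0 * x3 + 0 * x4 + 0 * x5, 0 * x0 + 0 * x1 + 3 * x2 + 1 * x3 + 0 * x4 + 0 * x5, 0 * x0 + 0 * x1 + 1 * x2 + 4 * x3 + 0 * x4 + 0 * x5, 0 * x0 + 0 * x1 + 0 * x2 + 0 * x3 + 4 * x4 + 1 * x5, 0 * x0 + 0 * x1 + 0 * x2 + 0 * x3 + 0 * x4 + 4 * x5] :: real list) ! i"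
  proof -
    have "i = 0 \<or> i = 1 \<or> i = 2 \<or> i = 3 \<or> i = 4 \<or> i = 5" using i by auto
    then show ?thesis unfolding sum6 by (auto simp: A2e A2s)
  qed
  finally show "((A7 + dA0) *\<^sub>v vec 6 (\<lambda>i. [x0, x1, x2, x3, x4, x5] ! i)) $ i = vec 6 (\<lambda>i. ([0 * x0 + 0 * x1 + 1 * x2 + 0 * x3 + 0 * x4 + 0 * x5, 0 * x0 + (-1) * x1 + 0 * x2 + 0 * x3 + 0 * x4 + 0 * x5, 0 * x0 + 0 * x1 + 3 * x2 + 1 * x3 + 0 * x4 + 0 * x5, 0 * x0 + 0 * x1 + 1 * x2 + 4 * x3 + 0 * x4 + 0 * x5, 0 * x0 + 0 * x1 + 0 * x2 + 0 * x3 + 4 * x4 + 1 * x5, 0 * x0 + 0 * x1 + 0 * x2 + 0 * x3 + 0 * x4 + 4 * x5] :: real list) ! i) $ i"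
    using i by simp
next
  show "dim_vec ((A7 + dA0) *\<^sub>v vec 6 (\<lambda>i. [x0, x1, x2, x3, x4, x5] ! i)) = dim_vec (vec 6 (\<lambda>i. ([0 * x0 + 0 * x1 + 1 * x2 + 0 * x3 + 0 * x4 + 0 * x5, 0 * x0 + (-1) * x1 + 0 * x2 + 0 * x3 + 0 * x4 + 0 * x5, 0 * x0 + 0 * x1 + 3 * x2 + 1 * x3 + 0 * x4 + 0 * x5, 0 * x0 + 0 * x1 + 1 * x2 + 4 * x3 + 0 * x4 + 0 * x5, 0 * x0 + 0 * x1 + 0 * x2 + 0 * x3 + 4 * x4 + 1 * x5, 0 * x0 + 0 * x1 + 0 * x2 + 0 * x3 + 0 * x4 + 4 * x5] :: real list) ! i))"
    using A2c[THEN carrier_matD(1)] by simp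
qed

lemma kerU:
  fixes v :: "real vec"
  assumes v: "v \<in> carrier_vec 6" and h: "mat_of_cols 6 [vec 6 (\<lambda>i. [0, 1, 1, 0, 0, 1] ! i), vec 6 (\<lambda>i. [1, (-1), 3, 1, 1, 4] ! i), vec 6 (\<lambda>i. [3, 1, 10, 7, 8, 16] ! i), vec 6 (\<lambda>i. [10, (-1), 37, 38, 48, 64] ! i), vec 6 (\<lambda>i. [37, 1, 149, 189, 256, 256] ! i), vec 6 (\<lambda>i. [149, (-1), 636, 905, 1280, 1024] ! i)] *\<^sub>v v = 0\<^sub>v 6"
  shows "v = 0\<^sub>v 6"
proof -
  have z: "\<And>r. r < 6 \<Longrightarrow> (mat_of_cols 6 [vec 6 (\<lambda>i. [0, 1, 1, 0, 0, 1] ! i), vec 6 (\<lambda>i. [1, (-1), 3, 1, 1, 4] ! i), vec 6 (\<lambda>i. [3, 1, 10, 7, 8, 16] ! i), vec 6 (\<lambda>i. [10, (-1), 37, 38, 48, 64] ! i), vec 6 (\<lambda>i. [37, 1, 149, 189, 256, 256] ! i), vec 6 (\<lambda>i. [149, (-1), 636, 905, 1280, 1024] ! i)] *\<^sub>v v) $ r = 0" using h by simp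
  have e0: "0 * v $ 0 + 1 * v $ 1 + 3 * v $ 2 + 10 * v $ 3 + 37 * v $ 4 + 149 * v $ 5 = 0" using mv6[OF v, of 0 "[0, 1, 1, 0, 0, 1]" "[1, (-1), 3, 1, 1, 4]" "[3, 1, 10, 7, 8, 16]" "[10, (-1), 37, 38, 48, 64]" "[37, 1, 149, 189, 256, 256]" "[149, (-1), 636, 905, 1280, 1024]"] z by simp
  have e1: "1 * v $ 0 + (-1) * v $ 1 + 1 * v $ 2 + (-1) * v $ 3 + 1 * v $ 4 + (-1) * v $ 5 = 0" using mv6[OF v, of 1 "[0, 1, 1, 0, 0, 1]" "[1, (-1), 3, 1, 1, 4]" "[3, 1, 10, 7, 8, 16]" "[10, (-1), 37, 38, 48, 64]" "[37, 1, 149, 189, 256, 256]" "[149, (-1), 636, 905, 1280, 1024]"] z by simp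
  have e2: "1 * v $ 0 + 3 * v $ 1 + 10 * v $ 2 + 37 * v $ 3 + 149 * v $ 4 + 636 * v $ 5 = 0" using mv6[OF v, of 2 "[0, 1, 1, 0, 0, 1]" "[1, (-1), 3, 1, 1, 4]" "[3, 1, 10, 7, 8, 16]" "[10, (-1), 37, 38, 48, 64]" "[37, 1, 149, 189, 256, 256]" "[149, (-1), 636, 905, 1280, 1024]"] z by simp
  have e3: "0 * v $ 0 + 1 * v $ 1 + 7 * v $ 2 + 38 * v $ 3 + 189 * v $ 4 + 905 * v $ 5 = 0" using mv6[OF v, of 3 "[0, 1, 1, 0, 0, 1]" "[1, (-1), 3, 1, 1, 4]" "[3, 1, 10, 7, 8, 16]" "[10, (-1), 37, 38, 48, 64]" "[37, 1, 149, 189, 256, 256]" "[149, (-1), 636, 905, 1280, 1024]"] z by simp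
  have e4: "0 * v $ 0 + 1 * v $ 1 + 8 * v $ 2 + 48 * v $ 3 + 256 * v $ 4 + 1280 * v $ 5 = 0" using mv6[OF v, of 4 "[0, 1, 1, 0, 0, 1]" "[1, (-1), 3, 1, 1, 4]" "[3, 1, 10, 7, 8, 16]" "[10, (-1), 37, 38, 48, 64]" "[37, 1, 149, 189, 256, 256]" "[149, (-1), 636, 905, 1280, 1024]"] z by simp
  have e5: "1 * v $ 0 + 4 * v $ 1 + 16 * v $ 2 + 64 * v $ 3 + 256 * v $ 4 + 1024 * v $ 5 = 0" using mv6[OF v, of 5 "[0, 1, 1, 0, 0, 1]" "[1, (-1), 3, 1, 1, 4]" "[3, 1, 10, 7, 8, 16]" "[10, (-1), 37, 38, 48, 64]" "[37, 1, 149, 189, 256, 256]" "[149, (-1), 636, 905, 1280, 1024]"] z by simp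
  show ?thesis by (rule vec6_eq0[OF v]) (use e0 e1 e2 e3 e4 e5 in linarith)+
qed

lemma kerJ:
  fixes v :: "real vec"
  assumes v: "v \<in> carrier_vec 6" and h: "mat_of_cols 6 [vec 6 (\<lambda>i. [0, 1, 1, 0, 0, 1] ! i), vec 6 (\<lambda>i. [0, 0, 1, 0, 0, 0] ! i), vec 6 (\<lambda>i. [0, 0, 0, 0, 1, 0] ! i), vec 6 (\<lambda>i. [1, (-1), 3, 1, 0, 4] ! i), vec 6 (\<lambda>i. [1, 0, 3, 1, 0, 0] ! i), vec 6 (\<lambda>i. [2, 1, 9, 7, 0, 16] ! i)] *\<^sub>v v = 0\<^sub>v 6"
  shows "v = 0\<^sub>v 6"
proof -
  have z: "\<And>r. r < 6 \<Longrightarrow> (mat_of_cols 6 [vec 6 (\<lambda>i. [0, 1, 1, 0, 0, 1] ! i), vec 6 (\<lambda>i. [0, 0, 1, 0, 0, 0] ! i), vec 6 (\<lambda>i. [0, 0, 0, 0, 1, 0] ! i), vec 6 (\<lambda>i. [1, (-1), 3, 1, 0, 4] ! i), vec 6 (\<lambda>i. [1, 0, 3, 1, 0, 0] ! i), vec 6 (\<lambda>i. [2, 1, 9, 7, 0, 16] ! i)] *\<^sub>v v) $ r = 0" using h by simp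
  have e0: "0 * v $ 0 + 0 * v $ 1 + 0 * v $ 2 + 1 * v $ 3 + 1 * v $ 4 + 2 * v $ 5 = 0" using mv6[OF v, of 0 "[0, 1, 1, 0, 0, 1]" "[0, 0, 1, 0, 0, 0]" "[0, 0, 0, 0, 1, 0]" "[1, (-1), 3, 1, 0, 4]" "[1, 0, 3, 1, 0, 0]" "[2, 1, 9, 7, 0, 16]"] z by simp
  have e1: "1 * v $ 0 + 0 * v $ 1 + 0 * v $ 2 + (-1) * v $ 3 + 0 * v $ 4 + 1 * v $ 5 = 0" using mv6[OF v, of 1 "[0, 1, 1, 0, 0, 1]" "[0, 0, 1, 0, 0, 0]" "[0, 0, 0, 0, 1, 0]" "[1, (-1), 3, 1, 0, 4]" "[1, 0, 3, 1, 0, 0]" "[2, 1, 9, 7, 0, 16]"] z by simp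
  have e2: "1 * v $ 0 + 1 * v $ 1 + 0 * v $ 2 + 3 * v $ 3 + 3 * v $ 4 + 9 * v $ 5 = 0" using mv6[OF v, of 2 "[0, 1, 1, 0, 0, 1]" "[0, 0, 1, 0, 0, 0]" "[0, 0, 0, 0, 1, 0]" "[1, (-1), 3, 1, 0, 4]" "[1, 0, 3, 1, 0, 0]" "[2, 1, 9, 7, 0, 16]"] z by simp
  have e3: "0 * v $ 0 + 0 * v $ 1 + 0 * v $ 2 + 1 * v $ 3 + 1 * v $ 4 + 7 * v $ 5 = 0" using mv6[OF v, of 3 "[0, 1, 1, 0, 0, 1]" "[0, 0, 1, 0, 0, 0]" "[0, 0, 0, 0, 1, 0]" "[1, (-1), 3, 1, 0, 4]" "[1, 0, 3, 1, 0, 0]" "[2, 1, 9, 7, 0, 16]"] z by simp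
  have e4: "0 * v $ 0 + 0 * v $ 1 + 1 * v $ 2 + 0 * v $ 3 + 0 * v $ 4 + 0 * v $ 5 = 0" using mv6[OF v, of 4 "[0, 1, 1, 0, 0, 1]" "[0, 0, 1, 0, 0, 0]" "[0, 0, 0, 0, 1, 0]" "[1, (-1), 3, 1, 0, 4]" "[1, 0, 3, 1, 0, 0]" "[2, 1, 9, 7, 0, 16]"] z by simp
  have e5: "1 * v $ 0 + 0 * v $ 1 + 0 * v $ 2 + 4 * v $ 3 + 0 * v $ 4 + 16 * v $ 5 = 0" using mv6[OF v, of 5 "[0, 1, 1, 0, 0, 1]" "[0, 0, 1, 0, 0, 0]" "[0, 0, 0, 0, 1, 0]" "[1, (-1), 3, 1, 0, 4]" "[1, 0, 3, 1, 0, 0]" "[2, 1, 9, 7, 0, 16]"] z by simp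
  show ?thesis by (rule vec6_eq0[OF v]) (use e0 e1 e2 e3 e4 e5 in linarith)+
qed


lemma sucs: "Suc 0 = (1::nat)" "Suc 1 = (2::nat)" "Suc 2 = (3::nat)" "Suc 3 = (4::nat)" "Suc 4 = (5::nat)"
  by simp_all

lemma ctrl_upper: "controllable (A7 + dA0) B7"
proof -
  let ?C = "(mat_of_cols 6 [vec 6 (\<lambda>i. [0, 1, 1, 0, 0, 1] ! i), vec 6 (\<lambda>i. [1, (-1), 3, 1, 1, 4] ! i), vec 6 (\<lambda>i. [3, 1, 10, 7, 8, 16] ! i), vec 6 (\<lambda>i. [10, (-1), 37, 38, 48, 64] ! i), vec 6 (\<lambda>i. [37, 1, 149, 189, 256, 256] ! i), vec 6 (\<lambda>i. [149, (-1), 636, 905, 1280, 1024] ! i)]) :: real mat"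
  have p0: "(A7 + dA0) ^\<^sub>m 0 *\<^sub>v vec 6 (\<lambda>i. [0, 1, 1, 0, 0, 1] ! i) = vec 6 (\<lambda>i. [0, 1, 1, 0, 0, 1] ! i)" by (rule pow0_mv[OF A2c vec_carrier])
  have p1: "(A7 + dA0) ^\<^sub>m 1 *\<^sub>v vec 6 (\<lambda>i. [0, 1, 1, 0, 0, 1] ! i) = vec 6 (\<lambda>i. [1, (-1), 3, 1, 1, 4] ! i)"
  proof -
    have "(A7 + dA0) ^\<^sub>m 1 *\<^sub>v vec 6 (\<lambda>i. [0, 1, 1, 0, 0, 1] ! i) = (A7 + dA0) *\<^sub>v ((A7 + dA0) ^\<^sub>m 0 *\<^sub>v vec 6 (\<lambda>i. [0, 1, 1, 0, 0, 1] ! i))"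
      by (rule pow_mv[OF A2c vec_carrier, of 0, unfolded sucs])
    also have "\<dots> = (A7 + dA0) *\<^sub>v vec 6 (\<lambda>i. [0, 1, 1, 0, 0, 1] ! i)" unfolding p0 ..
    also have "\<dots> = vec 6 (\<lambda>i. [1, (-1), 3, 1, 1, 4] ! i)" unfolding mulA2 by simp
    finally show ?thesis .
  qed
  have p2: "(A7 + dA0) ^\<^sub>m 2 *\<^sub>v vec 6 (\<lambda>i. [0, 1, 1, 0, 0, 1] ! i) = vec 6 (\<lambda>i. [3, 1, 10, 7, 8, 16] ! i)"
  proof -
    have "(A7 + dA0) ^\<^sub>m 2 *\<^sub>v vec 6 (\<lambda>i. [0, 1, 1, 0, 0, 1] ! i) = (A7 + dA0) *\<^sub>v ((A7 + dA0) ^\<^sub>m 1 *\<^sub>v vec 6 (\<lambda>i. [0, 1, 1, 0, 0, 1] ! i))"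
      by (rule pow_mv[OF A2c vec_carrier, of 1, unfolded sucs])
    also have "\<dots> = (A7 + dA0) *\<^sub>v vec 6 (\<lambda>i. [1, (-1), 3, 1, 1, 4] ! i)" unfolding p1 ..
    also have "\<dots> = vec 6 (\<lambda>i. [3, 1, 10, 7, 8, 16] ! i)" unfolding mulA2 by simp
    finally show ?thesis .
  qed
  have p3: "(A7 + dA0) ^\<^sub>m 3 *\<^sub>v vec 6 (\<lambda>i. [0, 1, 1, 0, 0, 1] ! i) = vec 6 (\<lambda>i. [10, (-1), 37, 38, 48, 64] ! i)"
  proof -
    have "(A7 + dA0) ^\<^sub>m 3 *\<^sub>v vec 6 (\<lambda>i. [0, 1, 1, 0, 0, 1] ! i) = (A7 + dA0) *\<^sub>v ((A7 + dA0) ^\<^sub>m 2 *\<^sub>v vec 6 (\<lambda>i. [0, 1, 1, 0, 0, 1] ! i))"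
      by (rule pow_mv[OF A2c vec_carrier, of 2, unfolded sucs])
    also have "\<dots> = (A7 + dA0) *\<^sub>v vec 6 (\<lambda>i. [3, 1, 10, 7, 8, 16] ! i)" unfolding p2 ..
    also have "\<dots> = vec 6 (\<lambda>i. [10, (-1), 37, 38, 48, 64] ! i)" unfolding mulA2 by simp
    finally show ?thesis .
  qed
  have p4: "(A7 + dA0) ^\<^sub>m 4 *\<^sub>v vec 6 (\<lambda>i. [0, 1, 1, 0, 0, 1] ! i) = vec 6 (\<lambda>i. [37, 1, 149, 189, 256, 256] ! i)"
  proof -
    have "(A7 + dA0) ^\<^sub>m 4 *\<^sub>v vec 6 (\<lambda>i. [0, 1, 1, 0, 0, 1] ! i) = (A7 + dA0) *\<^sub>v ((A7 + dA0) ^\<^sub>m 3 *\<^sub>v vec 6 (\<lambda>i. [0, 1, 1, 0, 0, 1] ! i))"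
      by (rule pow_mv[OF A2c vec_carrier, of 3, unfolded sucs])
    also have "\<dots> = (A7 + dA0) *\<^sub>v vec 6 (\<lambda>i. [10, (-1), 37, 38, 48, 64] ! i)" unfolding p3 ..
    also have "\<dots> = vec 6 (\<lambda>i. [37, 1, 149, 189, 256, 256] ! i)" unfolding mulA2 by simp
    finally show ?thesis .
  qed
  have p5: "(A7 + dA0) ^\<^sub>m 5 *\<^sub>v vec 6 (\<lambda>i. [0, 1, 1, 0, 0, 1] ! i) = vec 6 (\<lambda>i. [149, (-1), 636, 905, 1280, 1024] ! i)"
  proof -
    have "(A7 + dA0) ^\<^sub>m 5 *\<^sub>v vec 6 (\<lambda>i. [0, 1, 1, 0, 0, 1] ! i) = (A7 + dA0) *\<^sub>v ((A7 + dA0) ^\<^sub>m 4 *\<^sub>v vec 6 (\<lambda>i. [0, 1, 1, 0, 0, 1] ! i))"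
      by (rule pow_mv[OF A2c vec_carrier, of 4, unfolded sucs])
    also have "\<dots> = (A7 + dA0) *\<^sub>v vec 6 (\<lambda>i. [37, 1, 149, 189, 256, 256] ! i)" unfolding p4 ..
    also have "\<dots> = vec 6 (\<lambda>i. [149, (-1), 636, 905, 1280, 1024] ! i)" unfolding mulA2 by simp
    finally show ?thesis .
  qed
  have Cc: "?C \<in> carrier_mat 6 6" by (rule carrier_matI) simp_all
  show ?thesis
  proof (rule ctrb_full[OF A2c B7c Cc])
    fix j :: nat assume "j < 6"
    then consider "j = 0" | "j = 1" | "j = 2" | "j = 3" | "j = 4" | "j = 5" by linarith
    then show "\<exists>k i. k < 6 \<and> i < 1 \<and> col ?C j = (A7 + dA0) ^\<^sub>m k *\<^sub>v col B7 i"
    proof cases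
      case 1
      have "col ?C 0 = (A7 + dA0) ^\<^sub>m 0 *\<^sub>v col B7 0" unfolding vb_eq p0 by (simp add: col_mat_of_cols)
      moreover have "(0::nat) < 6" "(0::nat) < 1" by simp_all
      ultimately show ?thesis unfolding 1 by blast
    next
      case 2
      have "col ?C 1 = (A7 + dA0) ^\<^sub>m 1 *\<^sub>v col B7 0" unfolding vb_eq p1 by (simp add: col_mat_of_cols)
      moreover have "(1::nat) < 6" "(0::nat) < 1" by simp_all
      ultimately show ?thesis unfolding 2 by blast
    next
      case 3
      have "col ?C 2 = (A7 + dA0) ^\<^sub>m 2 *\<^sub>v col B7 0" unfolding vb_eq p2 by (simp add: col_mat_of_cols)
      moreover have "(2::nat) < 6" "(0::nat) < 1" by simp_all
      ultimately show ?thesis unfolding 3 by blast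
    next
      case 4
      have "col ?C 3 = (A7 + dA0) ^\<^sub>m 3 *\<^sub>v col B7 0" unfolding vb_eq p3 by (simp add: col_mat_of_cols)
      moreover have "(3::nat) < 6" "(0::nat) < 1" by simp_all
      ultimately show ?thesis unfolding 4 by blast
    next
      case 5
      have "col ?C 4 = (A7 + dA0) ^\<^sub>m 4 *\<^sub>v col B7 0" unfolding vb_eq p4 by (simp add: col_mat_of_cols)
      moreover have "(4::nat) < 6" "(0::nat) < 1" by simp_all
      ultimately show ?thesis unfolding 5 by blast
    next
      case 6
      have "col ?C 5 = (A7 + dA0) ^\<^sub>m 5 *\<^sub>v col B7 0" unfolding vb_eq p5 by (simp add: col_mat_of_cols)
      moreover have "(5::nat) < 6" "(0::nat) < 1" by simp_all
      ultimately show ?thesis unfolding 6 by blast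
    qed
  next
    fix v :: "real vec" assume "v \<in> carrier_vec 6" "?C *\<^sub>v v = 0\<^sub>v 6"
    then show "v = 0\<^sub>v 6" by (rule kerU)
  qed
qed

lemma unit6: "unit_vec 6 j = vec 6 (\<lambda>i. if i = j then 1 else (0::real))"
  unfolding unit_vec_def by simp

lemma augJ: "aug_cols B7 {2, 4} = mat_of_cols 6 [vec 6 (\<lambda>i. [0, 1, 1, 0, 0, 1] ! i), vec 6 (\<lambda>i. [0, 0, 1, 0, 0, 0] ! i), vec 6 (\<lambda>i. [0, 0, 0, 0, 1, 0] ! i)]"
proof -
  have d: "dim_row B7 = 6" "dim_col B7 = 1" using B7c by auto
  have cB: "cols B7 = [vec 6 (\<lambda>i. [0, 1, 1, 0, 0, 1] ! i)]" unfolding cols_def d vb_eq[symmetric] by simp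
  have sl: "sorted_list_of_set {2, 4::nat} = [2, 4]" by simp
  have u2: "unit_vec 6 2 = vec 6 (\<lambda>i. [0, 0, 1, 0, 0, 0] ! i)" unfolding unit6 by (rule eq_vecI) (auto simp: less_Suc_eq numeral_eq_Suc)
  have u4: "unit_vec 6 4 = vec 6 (\<lambda>i. [0, 0, 0, 0, 1, 0] ! i)" unfolding unit6 by (rule eq_vecI) (auto simp: less_Suc_eq numeral_eq_Suc)
  show ?thesis unfolding aug_cols_def d(1) cB sl list.map append_Cons append_Nil u2 u4 ..
qed

lemma ctrl_J: "controllable A7 (aug_cols B7 {2, 4})"
proof -
  let ?B = "mat_of_cols 6 [vec 6 (\<lambda>i. [0, 1, 1, 0, 0, 1] ! i), vec 6 (\<lambda>i. [0, 0, 1, 0, 0, 0] ! i), vec 6 (\<lambda>i. [0, 0, 0, 0, 1, 0] ! i)] :: real mat"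
  let ?C = "(mat_of_cols 6 [vec 6 (\<lambda>i. [0, 1, 1, 0, 0, 1] ! i), vec 6 (\<lambda>i. [0, 0, 1, 0, 0, 0] ! i), vec 6 (\<lambda>i. [0, 0, 0, 0, 1, 0] ! i), vec 6 (\<lambda>i. [1, (-1), 3, 1, 0, 4] ! i), vec 6 (\<lambda>i. [1, 0, 3, 1, 0, 0] ! i), vec 6 (\<lambda>i. [2, 1, 9, 7, 0, 16] ! i)]) :: real mat"
  have Bc: "?B \<in> carrier_mat 6 3" by (rule carrier_matI) simp_all
  have cb0: "col ?B 0 = vec 6 (\<lambda>i. [0, 1, 1, 0, 0, 1] ! i)" and cb1: "col ?B 1 = vec 6 (\<lambda>i. [0, 0, 1, 0, 0, 0] ! i)" and cb2: "col ?B 2 = vec 6 (\<lambda>i. [0, 0, 0, 0, 1, 0] ! i)"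
    by (simp_all add: col_mat_of_cols)
  have q0: "A7 ^\<^sub>m 0 *\<^sub>v vec 6 (\<lambda>i. [0, 1, 1, 0, 0, 1] ! i) = vec 6 (\<lambda>i. [0, 1, 1, 0, 0, 1] ! i)" by (rule pow0_mv[OF A7c vec_carrier])
  have q1: "A7 ^\<^sub>m 1 *\<^sub>v vec 6 (\<lambda>i. [0, 1, 1, 0, 0, 1] ! i) = vec 6 (\<lambda>i. [1, (-1), 3, 1, 0, 4] ! i)"
  proof -
    have "A7 ^\<^sub>m 1 *\<^sub>v vec 6 (\<lambda>i. [0, 1, 1, 0, 0, 1] ! i) = A7 *\<^sub>v (A7 ^\<^sub>m 0 *\<^sub>v vec 6 (\<lambda>i. [0, 1, 1, 0, 0, 1] ! i))"
      by (rule pow_mv[OF A7c vec_carrier, of 0, unfolded sucs])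
    also have "\<dots> = A7 *\<^sub>v vec 6 (\<lambda>i. [0, 1, 1, 0, 0, 1] ! i)" unfolding q0 ..
    also have "\<dots> = vec 6 (\<lambda>i. [1, (-1), 3, 1, 0, 4] ! i)" unfolding mulA7 by simp
    finally show ?thesis .
  qed
  have q2: "A7 ^\<^sub>m 2 *\<^sub>v vec 6 (\<lambda>i. [0, 1, 1, 0, 0, 1] ! i) = vec 6 (\<lambda>i. [2, 1, 9, 7, 0, 16] ! i)"
  proof -
    have "A7 ^\<^sub>m 2 *\<^sub>v vec 6 (\<lambda>i. [0, 1, 1, 0, 0, 1] ! i) = A7 *\<^sub>v (A7 ^\<^sub>m 1 *\<^sub>v vec 6 (\<lambda>i. [0, 1, 1, 0, 0, 1] ! i))"
      by (rule pow_mv[OF A7c vec_carrier, of 1, unfolded sucs])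
    also have "\<dots> = A7 *\<^sub>v vec 6 (\<lambda>i. [1, (-1), 3, 1, 0, 4] ! i)" unfolding q1 ..
    also have "\<dots> = vec 6 (\<lambda>i. [2, 1, 9, 7, 0, 16] ! i)" unfolding mulA7 by simp
    finally show ?thesis .
  qed
  have r0: "A7 ^\<^sub>m 0 *\<^sub>v vec 6 (\<lambda>i. [0, 0, 1, 0, 0, 0] ! i) = vec 6 (\<lambda>i. [0, 0, 1, 0, 0, 0] ! i)" by (rule pow0_mv[OF A7c vec_carrier])
  have r1: "A7 ^\<^sub>m 1 *\<^sub>v vec 6 (\<lambda>i. [0, 0, 1, 0, 0, 0] ! i) = vec 6 (\<lambda>i. [1, 0, 3, 1, 0, 0] ! i)"
  proof -
    have "A7 ^\<^sub>m 1 *\<^sub>v vec 6 (\<lambda>i. [0, 0, 1, 0, 0, 0] ! i) = A7 *\<^sub>v (A7 ^\<^sub>m 0 *\<^sub>v vec 6 (\<lambda>i. [0, 0, 1, 0, 0, 0] ! i))"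
      by (rule pow_mv[OF A7c vec_carrier, of 0, unfolded sucs])
    also have "\<dots> = A7 *\<^sub>v vec 6 (\<lambda>i. [0, 0, 1, 0, 0, 0] ! i)" unfolding r0 ..
    also have "\<dots> = vec 6 (\<lambda>i. [1, 0, 3, 1, 0, 0] ! i)" unfolding mulA7 by simp
    finally show ?thesis .
  qed
  have s0: "A7 ^\<^sub>m 0 *\<^sub>v vec 6 (\<lambda>i. [0, 0, 0, 0, 1, 0] ! i) = vec 6 (\<lambda>i. [0, 0, 0, 0, 1, 0] ! i)" by (rule pow0_mv[OF A7c vec_carrier])
  have Cc: "?C \<in> carrier_mat 6 6" by (rule carrier_matI) simp_all
  have "controllable A7 ?B"
  proof (rule ctrb_full[OF A7c Bc Cc])
    fix j :: nat assume "j < 6"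
    then consider "j = 0" | "j = 1" | "j = 2" | "j = 3" | "j = 4" | "j = 5" by linarith
    then show "\<exists>k i. k < 6 \<and> i < 3 \<and> col ?C j = A7 ^\<^sub>m k *\<^sub>v col ?B i"
    proof cases
      case 1
      have "col ?C 0 = A7 ^\<^sub>m 0 *\<^sub>v col ?B 0" unfolding cb0 q0 by (simp add: col_mat_of_cols)
      moreover have "(0::nat) < 6" "(0::nat) < 3" by simp_all
      ultimately show ?thesis unfolding 1 by blast
    next
      case 2
      have "col ?C 1 = A7 ^\<^sub>m 0 *\<^sub>v col ?B 1" unfolding cb1 r0 by (simp add: col_mat_of_cols)
      moreover have "(0::nat) < 6" "(1::nat) < 3" by simp_all
      ultimately show ?thesis unfolding 2 by blast
    next
      case 3
      have "col ?C 2 = A7 ^\<^sub>m 0 *\<^sub>v col ?B 2" unfolding cb2 s0 by (simp add: col_mat_of_cols)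
      moreover have "(0::nat) < 6" "(2::nat) < 3" by simp_all
      ultimately show ?thesis unfolding 3 by blast
    next
      case 4
      have "col ?C 3 = A7 ^\<^sub>m 1 *\<^sub>v col ?B 0" unfolding cb0 q1 by (simp add: col_mat_of_cols)
      moreover have "(1::nat) < 6" "(0::nat) < 3" by simp_all
      ultimately show ?thesis unfolding 4 by blast
    next
      case 5
      have "col ?C 4 = A7 ^\<^sub>m 1 *\<^sub>v col ?B 1" unfolding cb1 r1 by (simp add: col_mat_of_cols)
      moreover have "(1::nat) < 6" "(1::nat) < 3" by simp_all
      ultimately show ?thesis unfolding 5 by blast
    next
      case 6
      have "col ?C 5 = A7 ^\<^sub>m 2 *\<^sub>v col ?B 0" unfolding cb0 q2 by (simp add: col_mat_of_cols)
      moreover have "(2::nat) < 6" "(0::nat) < 3" by simp_all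
      ultimately show ?thesis unfolding 6 by blast
    qed
  next
    fix v :: "real vec" assume "v \<in> carrier_vec 6" "?C *\<^sub>v v = 0\<^sub>v 6"
    then show "v = 0\<^sub>v 6" by (rule kerJ)
  qed
  then show ?thesis unfolding augJ .
qed

lemma notc_L:
  fixes L :: "real vec list" and w :: "real vec"
  assumes L: "set L \<subseteq> carrier_vec 6" and w: "w \<in> carrier_vec 6" "w \<noteq> 0\<^sub>v 6"
    and eig: "\<And>c. c < 6 \<Longrightarrow> (\<Sum>i\<in>{0..<6}. w $ i * A7 $$ (i, c)) = 4 * w $ c"
    and orth: "\<And>v. v \<in> set L \<Longrightarrow> w \<bullet> v = 0"
  shows "\<not> controllable A7 (mat_of_cols 6 L)"
proof (rule not_ctrb_cert[OF A7c mat_of_cols_carrier(1) w eig])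
  fix j assume j: "j < length L"
  have Lj: "L ! j \<in> carrier_vec 6" using L j nth_mem by blast
  then have dj: "dim_vec (L ! j) = 6" by simp
  have "(\<Sum>i\<in>{0..<6}. w $ i * mat_of_cols 6 L $$ (i, j)) = (\<Sum>i\<in>{0..<6}. w $ i * L ! j $ i)"
    using j by (intro sum.cong) (auto simp: mat_of_cols_def)
  also have "\<dots> = w \<bullet> L ! j" unfolding scalar_prod_def dj ..
  also have "\<dots> = 0" using orth j by simp
  finally show "(\<Sum>i\<in>{0..<6}. w $ i * mat_of_cols 6 L $$ (i, j)) = 0" .
qed

lemma eig_wa: "c < 6 \<Longrightarrow> (\<Sum>i\<in>{0..<6}. vec 6 (\<lambda>i. [0, 0, 1, 1, 0, -1] ! i) $ i * A7 $$ (i, c)) =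
   4 * vec 6 (\<lambda>i. [0, 0, 1, 1, 0, -1 :: real] ! i) $ c"
proof -
  assume c: "c < 6"
  then have "c = 0 \<or> c = 1 \<or> c = 2 \<or> c = 3 \<or> c = 4 \<or> c = 5" by linarith
  then show ?thesis unfolding sum6 by (auto simp: A7e A7s)
qed

lemma eig_we: "c < 6 \<Longrightarrow> (\<Sum>i\<in>{0..<6}. vec 6 (\<lambda>i. [0, 0, 0, 0, 1, 0] ! i) $ i * A7 $$ (i, c)) =
   4 * vec 6 (\<lambda>i. [0, 0, 0, 0, 1, 0 :: real] ! i) $ c"
proof -
  assume c: "c < 6"
  then have "c = 0 \<or> c = 1 \<or> c = 2 \<or> c = 3 \<or> c = 4 \<or> c = 5" by linarith
  then show ?thesis unfolding sum6 by (auto simp: A7e A7s)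
qed

lemma wa_nz: "vec 6 (\<lambda>i. [0, 0, 1, 1, 0, -1 :: real] ! i) \<noteq> 0\<^sub>v 6"
proof
  assume h: "vec 6 (\<lambda>i. [0, 0, 1, 1, 0, -1 :: real] ! i) = 0\<^sub>v 6"
  have "vec 6 (\<lambda>i. [0, 0, 1, 1, 0, -1 :: real] ! i) $ 2 = 0\<^sub>v 6 $ 2" unfolding h ..
  then show False by simp
qed

lemma we_nz: "vec 6 (\<lambda>i. [0, 0, 0, 0, 1, 0 :: real] ! i) \<noteq> 0\<^sub>v 6"
proof
  assume h: "vec 6 (\<lambda>i. [0, 0, 0, 0, 1, 0 :: real] ! i) = 0\<^sub>v 6"
  have "vec 6 (\<lambda>i. [0, 0, 0, 0, 1, 0 :: real] ! i) $ 4 = 0\<^sub>v 6 $ 4" unfolding h ..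
  then show False by simp
qed

lemma wa_vb: "vec 6 (\<lambda>i. [0, 0, 1, 1, 0, -1 :: real] ! i) \<bullet> vec 6 (\<lambda>i. [0, 1, 1, 0, 0, 1] ! i) = 0"
  unfolding scalar_prod_def by (simp add: sum6)

lemma we_vb: "vec 6 (\<lambda>i. [0, 0, 0, 0, 1, 0 :: real] ! i) \<bullet> vec 6 (\<lambda>i. [0, 1, 1, 0, 0, 1] ! i) = 0"
  unfolding scalar_prod_def by (simp add: sum6)

lemma aug_L: "aug_cols B7 J = mat_of_cols 6 (vec 6 (\<lambda>i. [0, 1, 1, 0, 0, 1] ! i) # map (unit_vec 6) (sorted_list_of_set J))"
proof -
  have d: "dim_row B7 = 6" "dim_col B7 = 1" using B7c by auto
  have cB: "cols B7 = [vec 6 (\<lambda>i. [0, 1, 1, 0, 0, 1] ! i)]" unfolding cols_def d vb_eq[symmetric] by simp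
  show ?thesis unfolding aug_cols_def d(1) cB by simp
qed

lemma notJ:
  assumes J: "J \<subseteq> {0..<6}" and cJ: "card J \<le> 1"
  shows "\<not> controllable A7 (aug_cols B7 J)"
proof -
  let ?vb = "vec 6 (\<lambda>i. [0, 1, 1, 0, 0, 1] ! i) :: real vec"
  let ?wa = "vec 6 (\<lambda>i. [0, 0, 1, 1, 0, -1] ! i) :: real vec"
  let ?we = "vec 6 (\<lambda>i. [0, 0, 0, 0, 1, 0] ! i) :: real vec"
  have fJ: "finite J" using J finite_subset by blast
  have one: "\<forall>x\<in>J. \<forall>y\<in>J. x = y" using cJ fJ by (simp add: card_le_Suc0_iff_eq)
  have vbc: "?vb \<in> carrier_vec 6" by (rule vec_carrier)
  show ?thesis
  proof (cases "J = {}")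
    case True
    have sl: "sorted_list_of_set J = []" unfolding True by simp
    have "\<not> controllable A7 (mat_of_cols 6 [?vb])"
    proof (rule notc_L[OF _ vec_carrier wa_nz eig_wa])
      show "set [?vb] \<subseteq> carrier_vec 6" using vbc by simp
      fix v assume "v \<in> set [?vb]"
      then have "v = ?vb" by simp
      then show "?wa \<bullet> v = 0" by (simp only: wa_vb)
    qed
    then show ?thesis unfolding aug_L sl list.map .
  next
    case False
    then obtain j where jJ: "j \<in> J" by blast
    then have Jj: "J = {j}" using one by blast
    have j6: "j < 6" using jJ J by auto
    have sl: "sorted_list_of_set J = [j]" unfolding Jj by simp
    have uc: "unit_vec 6 j \<in> carrier_vec (6::nat)" by (rule unit_vec_carrier)
    have sc: "set [?vb, unit_vec 6 j] \<subseteq> carrier_vec 6" using vbc uc by simp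
    have "\<not> controllable A7 (mat_of_cols 6 [?vb, unit_vec 6 j])"
    proof (cases "j \<in> {2, 3, 5}")
      case True
      have "?we \<bullet> unit_vec 6 j = ?we $ j" using j6 by (rule scalar_prod_right_unit)
      also have "\<dots> = 0" using True by auto
      finally have o: "?we \<bullet> unit_vec 6 j = 0" .
      show ?thesis
      proof (rule notc_L[OF sc vec_carrier we_nz eig_we])
        fix v assume "v \<in> set [?vb, unit_vec 6 j]"
        then have "v = ?vb \<or> v = unit_vec 6 j" by simp
        then show "?we \<bullet> v = 0" using we_vb o by metis
      qed
    next
      case False
      then have jj: "j = 0 \<or> j = 1 \<or> j = 4" using j6 by auto
      have "?wa \<bullet> unit_vec 6 j = ?wa $ j" using j6 by (rule scalar_prod_right_unit)
      also have "\<dots> = 0" using jj by auto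
      finally have o: "?wa \<bullet> unit_vec 6 j = 0" .
      show ?thesis
      proof (rule notc_L[OF sc vec_carrier wa_nz eig_wa])
        fix v assume "v \<in> set [?vb, unit_vec 6 j]"
        then have "v = ?vb \<or> v = unit_vec 6 j" by simp
        then show "?wa \<bullet> v = 0" using wa_vb o by metis
      qed
    qed
    then show ?thesis unfolding aug_L sl list.map .
  qed
qed

lemma nnz_dA0: "nnz dA0 = 3"
proof -
  have "{(i, j). i < dim_row dA0 \<and> j < dim_col dA0 \<and> dA0 $$ (i, j) \<noteq> 0} = {(0, 0), (2, 3), (4, 5)}"
    unfolding dA0_def by (auto split: if_splits)
  then show ?thesis unfolding nnz_def by simp
qed

lemma nnz_0: "nnz (0\<^sub>m 6 1 :: real mat) = 0"
proof -
  have "{(i, j). i < dim_row (0\<^sub>m 6 1 :: real mat) \<and> j < dim_col (0\<^sub>m 6 1 :: real mat) \<and> (0\<^sub>m 6 1 :: real mat) $$ (i, j) \<noteq> 0} = {}"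
  proof (intro equalityI subsetI)
    fix x assume "x \<in> {(i, j). i < dim_row (0\<^sub>m 6 1 :: real mat) \<and> j < dim_col (0\<^sub>m 6 1 :: real mat) \<and> (0\<^sub>m 6 1 :: real mat) $$ (i, j) \<noteq> 0}"
    then obtain i j where "x = (i, j)" "i < 6" "j < 1" "(0\<^sub>m 6 1 :: real mat) $$ (i, j) \<noteq> 0" by auto
    then show "x \<in> {}" by simp
  qed simp
  then show ?thesis unfolding nnz_def by (metis card.empty)
qed

theorem mainTheorem7:
  shows "rc A7 B7 = 3 \<and>
         Inf {card J | J. J \<subseteq> {0..<6} \<and> controllable A7 (aug_cols B7 J)} = 2"
proof
  have d1: "dim_row A7 = 6" using A7c by (rule carrier_matD(1))
  have d2: "dim_col B7 = 1" using B7c by (rule carrier_matD(2))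
  show "rc A7 B7 = 3" unfolding rc_def d1 d2
  proof (rule cInf_eq_minimum)
    have B0: "B7 + 0\<^sub>m 6 1 = B7" by (rule right_add_zero_mat[OF B7c])
    have c: "controllable (A7 + dA0) (B7 + 0\<^sub>m 6 1)" unfolding B0 by (rule ctrl_upper)
    have e: "(3::nat) = nnz dA0 + nnz (0\<^sub>m 6 1 :: real mat)" unfolding nnz_dA0 nnz_0 by simp
    have z: "(0\<^sub>m 6 1 :: real mat) \<in> carrier_mat 6 1" by (rule zero_carrier_mat)
    show "3 \<in> {nnz dA + nnz dB |dA dB.
        dA \<in> carrier_mat 6 6 \<and> dB \<in> carrier_mat 6 1 \<and> controllable (A7 + dA) (B7 + dB)}"
      by (rule CollectI, rule exI[of _ dA0], rule exI[of _ "0\<^sub>m 6 1"], intro conjI e dA0c z c)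
  next
    fix x assume "x \<in> {nnz dA + nnz dB |dA dB.
        dA \<in> carrier_mat 6 6 \<and> dB \<in> carrier_mat 6 1 \<and> controllable (A7 + dA) (B7 + dB)}"
    then obtain dA dB where x: "x = nnz dA + nnz dB" and dA: "dA \<in> carrier_mat 6 6"
      and dB: "dB \<in> carrier_mat 6 1" and c: "controllable (A7 + dA) (B7 + dB)"
      unfolding mem_Collect_eq by blast
    show "3 \<le> x"
    proof (rule ccontr)
      assume "\<not> 3 \<le> x"
      then have "nnz dA + nnz dB \<le> 2" using x by simp
      then have "\<not> controllable (A7 + dA) (B7 + dB)" by (rule lower[OF dA dB])
      then show False using c by contradiction
    qed
  qed
next
  show "Inf {card J | J. J \<subseteq> {0..<6} \<and> controllable A7 (aug_cols B7 J)} = 2"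
  proof (rule cInf_eq_minimum)
    have s: "{2, 4::nat} \<subseteq> {0..<6}" by auto
    have e: "(2::nat) = card {2, 4::nat}" by simp
    show "2 \<in> {card J | J. J \<subseteq> {0..<6} \<and> controllable A7 (aug_cols B7 J)}"
      by (rule CollectI, rule exI[of _ "{2, 4}"], intro conjI e s ctrl_J)
  next
    fix x assume "x \<in> {card J | J. J \<subseteq> {0..<6} \<and> controllable A7 (aug_cols B7 J)}"
    then obtain J where x: "x = card J" and J: "J \<subseteq> {0..<6}" and c: "controllable A7 (aug_cols B7 J)"
      unfolding mem_Collect_eq by blast
    show "2 \<le> x"
    proof (rule ccontr)
      assume "\<not> 2 \<le> x"
      then have "card J \<le> 1" using x by simp
      then have "\<not> controllable A7 (aug_cols B7 J)" by (rule notJ[OF J])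
      then show False using c by contradiction
    qed
  qed
qed

end
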